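(* Let $X$ be a pure $d$-dimensional weighted simplicial complex with $d\ge2$, and let $\lambda\in(0,1]$. Suppose that (i) for every $\tau\in X$ with $\dim\tau\le d-2$ (including $\tau=\emptyset$) the 1-skeleton of $X_\tau$ is connected, and (ii) for every $\tau\in X(d-2)$ the second largest eigenvalue of the adjacency operator of the 1-skeleton of $X_\tau$ is at most $\frac{\lambda}{1+(d-1)\lambda}$. Then $X$ is a $\lambda$-local spectral expander.
   Context: A pure $d$-dimensional simplicial complex $X$ is a finite family of finite sets closed under taking subsets, all of whose maximal members have $d+1$ elements; $X(i)$ denotes the set of faces with $i+1$ elements, $\dim\tau=|\tau|-1$, $X(-1)=\{\emptyset\}$. A weighted complex is equipped with a probability distribution $\Pi$ on $X(d)$; the weight of $\tau\in X(i)$ is $w(\tau)=\binom{d+1}{i+1}^{-1}\sum_{\sigma\in X(d),\,\sigma\supseteq\tau}\Pi(\sigma)$. The link of $\tau$ is $X_\tau=\{\sigma\setminus\tau:\ \tau\subseteq\sigma\in X\}$, weighted by the distribution $\Pi_\tau(\eta)=\Pi(\eta\cup\tau)/\sum_{\sigma\in X(d),\sigma\supseteq\tau}\Pi(\sigma)$ on its top faces, with induced weights $w_\tau$ by the same formula; $X_\emptyset=X$. For a weighted complex $Y$ of dimension $\ge1$, the normalized adjacency operator of its 1-skeleton acts on $f:Y(0)\to\mathbb R$ by $(Af)(v)=\sum_{u:\{u,v\}\in Y(1)}\frac{w(\{v,u\})}{2w(v)}f(u)$; it is self-adjoint w.r.t. $\langle f,g\rangle=\sum_v w(v)f(v)g(v)$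 and has real eigenvalues $1=\lambda_1\ge\lambda_2\ge\cdots$. $X$ is a $\lambda$-local spectral expander if for every $-1\le i\le d-2$ and every $\tau\in X(i)$ the 1-skeleton of $X_\tau$ is connected and its adjacency operator has $\lambda_2\le\lambda$. *)

theory Defs
  imports "Jordan_Normal_Form.Char_Poly" "HOL-Library.Multiset"
begin

definition pure_complex :: "'a set set \<Rightarrow> nat \<Rightarrow> bool" where
  "pure_complex X k \<longleftrightarrow> finite X \<and> X \<noteq> {} \<and> (\<forall>\<sigma>\<in>X. finite \<sigma>) \<and>
     (\<forall>\<sigma>\<in>X. \<forall>\<tau>. \<tau> \<subseteq> \<sigma> \<longrightarrow> \<tau> \<in> X) \<and>
     (\<forall>\<sigma>\<in>X. card \<sigma> \<le> k + 1) \<and>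
     (\<forall>\<sigma>\<in>X. \<exists>\<eta>\<in>X. \<sigma> \<subseteq> \<eta> \<and> card \<eta> = k + 1)"

definition top_faces :: "'a set set \<Rightarrow> nat \<Rightarrow> 'a set set" where
  "top_faces X k = {\<sigma>\<in>X. card \<sigma> = k + 1}"

definition weighted_complex :: "'a set set \<Rightarrow> nat \<Rightarrow> ('a set \<Rightarrow> real) \<Rightarrow> bool" where
  "weighted_complex X k P \<longleftrightarrow> pure_complex X k \<and> (\<forall>\<sigma>\<in>top_faces X k. P \<sigma> > 0) \<and>
     (\<Sum>\<sigma>\<in>top_faces X k. P \<sigma>) = 1"

definition weight :: "'a set set \<Rightarrow> nat \<Rightarrow> ('a set \<Rightarrow> real) \<Rightarrow> 'a set \<Rightarrow> real" where
  "weight X k P \<tau> = (\<Sum>\<sigma>\<in>{\<sigma>\<in>top_faces X k. \<tau> \<subseteq> \<sigma>}. P \<sigma>) / real ((k + 1) choose card \<tau>)"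

definition link :: "'a set set \<Rightarrow> 'a set \<Rightarrow> 'a set set" where
  "link X \<tau> = {\<sigma> - \<tau> | \<sigma>. \<sigma> \<in> X \<and> \<tau> \<subseteq> \<sigma>}"

definition link_dist :: "'a set set \<Rightarrow> nat \<Rightarrow> ('a set \<Rightarrow> real) \<Rightarrow> 'a set \<Rightarrow> 'a set \<Rightarrow> real" where
  "link_dist X k P \<tau> \<eta> = P (\<eta> \<union> \<tau>) / (\<Sum>\<sigma>\<in>{\<sigma>\<in>top_faces X k. \<tau> \<subseteq> \<sigma>}. P \<sigma>)"

definition vertices :: "'a set set \<Rightarrow> 'a set" where
  "vertices Y = {v. {v} \<in> Y}"

definition skel_edge :: "'a set set \<Rightarrow> 'a \<Rightarrow> 'a \<Rightarrow> bool" where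
  "skel_edge Y u v \<longleftrightarrow> u \<noteq> v \<and> {u, v} \<in> Y"

definition skel_connected :: "'a set set \<Rightarrow> bool" where
  "skel_connected Y \<longleftrightarrow> (\<forall>u\<in>vertices Y. \<forall>v\<in>vertices Y. (skel_edge Y)\<^sup>*\<^sup>* u v)"

(* a fixed enumeration of the vertex set (the spectrum does not depend on the choice) *)
definition vertex_list :: "'a set set \<Rightarrow> 'a list" where
  "vertex_list Y = (SOME xs. distinct xs \<and> set xs = vertices Y)"

definition adj_matrix :: "'a set set \<Rightarrow> nat \<Rightarrow> ('a set \<Rightarrow> real) \<Rightarrow> real mat" where
  "adj_matrix Y k P = (let vs = vertex_list Y; n = length vs in
     mat n n (\<lambda>(i, j). if skel_edge Y (vs ! i) (vs ! j)
        then weight Y k P {vs ! i, vs ! j} / (2 * weight Y k P {vs ! i}) else 0))"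

definition eigenvalues_desc :: "'a set set \<Rightarrow> nat \<Rightarrow> ('a set \<Rightarrow> real) \<Rightarrow> real list" where
  "eigenvalues_desc Y k P = rev (sorted_list_of_multiset (proots (char_poly (adj_matrix Y k P))))"

definition lambda2 :: "'a set set \<Rightarrow> nat \<Rightarrow> ('a set \<Rightarrow> real) \<Rightarrow> real" where
  "lambda2 Y k P = eigenvalues_desc Y k P ! 1"

(* lambda-local spectral expander: for every tau in X(i), -1 <= i <= d-2 *)
definition local_spectral_expander :: "'a set set \<Rightarrow> nat \<Rightarrow> ('a set \<Rightarrow> real) \<Rightarrow> real \<Rightarrow> bool" where
  "local_spectral_expander X d P lam \<longleftrightarrow>
     (\<forall>\<tau>\<in>X. card \<tau> + 1 \<le> d \<longrightarrow>
        skel_connected (link X \<tau>) \<and>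
        lambda2 (link X \<tau>) (d - card \<tau>) (link_dist X d P \<tau>) \<le> lam)"

end

theory Submission
  imports Defs "HOL-Analysis.Function_Topology"
begin

locale wsym =
  fixes n :: nat and w :: "nat \<Rightarrow> real" and A :: "real mat"
  assumes A: "A \<in> carrier_mat n n"
    and wpos: "\<And>i. i < n \<Longrightarrow> 0 < w i"
    and sym: "\<And>i j. i < n \<Longrightarrow> j < n \<Longrightarrow> w i * A $$ (i,j) = w j * A $$ (j,i)"
begin

definition ip :: "(nat \<Rightarrow> real) \<Rightarrow> (nat \<Rightarrow> real) \<Rightarrow> real" where
  "ip f g = (\<Sum>i<n. w i * f i * g i)"
definition Av :: "(nat \<Rightarrow> real) \<Rightarrow> nat \<Rightarrow> real" where
  "Av f i = (\<Sum>j<n. A $$ (i,j) * f j)"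
definition Q :: "(nat \<Rightarrow> real) \<Rightarrow> real" where
  "Q f = ip (Av f) f"

lemma ip_comm: "ip f g = ip g f"
  unfolding ip_def by (simp add: ac_simps)

lemma ip_add_left: "ip (\<lambda>i. f i + c * g i) h = ip f h + c * ip g h"
  unfolding ip_def by (simp add: algebra_simps sum.distrib sum_distrib_left)

lemma ip_scale_left: "ip (\<lambda>i. c * f i) h = c * ip f h"
  unfolding ip_def by (simp add: algebra_simps sum_distrib_left)

lemma ip_term_nn: "i < n \<Longrightarrow> 0 \<le> w i * f i * f i"
  using wpos[of i] by (simp add: mult.assoc)

lemma ip_nonneg: "0 \<le> ip f f"
  unfolding ip_def using ip_term_nn by (intro sum_nonneg) auto

lemma ip_zero: "ip f f = 0 \<Longrightarrow> i < n \<Longrightarrow> f i = 0"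
proof -
  assume h: "ip f f = 0" "i < n"
  have "\<forall>j\<in>{..<n}. w j * f j * f j = 0"
    using h(1) unfolding ip_def
    by (subst sum_nonneg_eq_0_iff[symmetric]) (use ip_term_nn in auto)
  then have "w i * f i * f i = 0" using h(2) by blast
  then show ?thesis using wpos[OF h(2)] by simp
qed

lemma ip_pos: "i < n \<Longrightarrow> f i \<noteq> 0 \<Longrightarrow> 0 < ip f f"
  using ip_nonneg[of f] ip_zero[of f i] by force

lemma ip_cong: "(\<And>i. i < n \<Longrightarrow> f i = f' i) \<Longrightarrow> ip f g = ip f' g"
  unfolding ip_def by (intro sum.cong) auto

lemma Av_cong: "(\<And>i. i < n \<Longrightarrow> f i = f' i) \<Longrightarrow> Av f = Av f'"
  unfolding Av_def by (intro ext sum.cong) auto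

lemma Av_add: "Av (\<lambda>i. f i + c * g i) = (\<lambda>i. Av f i + c * Av g i)"
  unfolding Av_def by (simp add: algebra_simps sum.distrib sum_distrib_left)

lemma Av_scale: "Av (\<lambda>i. c * g i) = (\<lambda>i. c * Av g i)"
  unfolding Av_def by (simp add: algebra_simps sum_distrib_left)

lemma ip_Av: "ip (Av f) g = ip f (Av g)"
proof -
  have "ip (Av f) g = (\<Sum>i<n. \<Sum>j<n. w i * A$$(i,j) * f j * g i)"
    unfolding ip_def Av_def by (simp add: sum_distrib_left sum_distrib_right ac_simps)
  also have "\<dots> = (\<Sum>j<n. \<Sum>i<n. w i * A$$(i,j) * f j * g i)" by (rule sum.swap)
  also have "\<dots> = (\<Sum>j<n. \<Sum>i<n. w j * A$$(j,i) * f j * g i)"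
    using sym by (intro sum.cong refl) auto
  also have "\<dots> = ip f (Av g)"
    unfolding ip_def Av_def by (simp add: sum_distrib_left sum_distrib_right ac_simps)
  finally show ?thesis .
qed

lemma Q_cong: "(\<And>i. i < n \<Longrightarrow> f i = f' i) \<Longrightarrow> Q f = Q f'"
  unfolding Q_def using Av_cong[of f f'] ip_cong[of f f'] ip_comm by metis

lemma Q_add: "Q (\<lambda>i. f i + t * h i) = Q f + 2 * t * ip (Av f) h + t^2 * Q h"
proof -
  have "Q (\<lambda>i. f i + t * h i) = ip (\<lambda>i. Av f i + t * Av h i) (\<lambda>i. f i + t * h i)"
    unfolding Q_def Av_add ..
  also have "\<dots> = ip (Av f) (\<lambda>i. f i + t * h i) + t * ip (Av h) (\<lambda>i. f i + t * h i)"
    by (rule ip_add_left)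
  also have "ip (Av f) (\<lambda>i. f i + t * h i) = ip (Av f) f + t * ip (Av f) h"
    by (subst ip_comm, subst ip_add_left, simp add: ip_comm)
  also have "ip (Av h) (\<lambda>i. f i + t * h i) = ip (Av h) f + t * ip (Av h) h"
    by (subst ip_comm, subst ip_add_left, simp add: ip_comm)
  also have "ip (Av h) f = ip (Av f) h" using ip_Av ip_comm by metis
  finally show ?thesis unfolding Q_def power2_eq_square by (simp add: algebra_simps)
qed

lemma ip_add_both: "ip (\<lambda>i. f i + t * h i) (\<lambda>i. f i + t * h i) = ip f f + 2 * t * ip f h + t^2 * ip h h"
proof -
  have "ip (\<lambda>i. f i + t * h i) (\<lambda>i. f i + t * h i) = ip f (\<lambda>i. f i + t * h i) + t * ip h (\<lambda>i. f i + t * h i)"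
    by (rule ip_add_left)
  also have "ip f (\<lambda>i. f i + t * h i) = ip f f + t * ip f h"
    by (subst ip_comm, subst ip_add_left, simp add: ip_comm)
  also have "ip h (\<lambda>i. f i + t * h i) = ip h f + t * ip h h"
    by (subst ip_comm, subst ip_add_left, simp add: ip_comm)
  finally show ?thesis using ip_comm[of h f] unfolding power2_eq_square by (simp add: algebra_simps)
qed

lemma Q_scale: "Q (\<lambda>i. c * f i) = c^2 * Q f"
  unfolding Q_def Av_scale ip_scale_left power2_eq_square
  by (subst ip_comm, subst ip_scale_left, simp add: ip_comm)

lemma ip_scale_both: "ip (\<lambda>i. c * f i) (\<lambda>i. c * f i) = c^2 * ip f f"
  unfolding ip_scale_left power2_eq_square
  by (subst ip_comm, subst ip_scale_left, simp add: ip_comm)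

lemma mult_vec_Av: "v \<in> carrier_vec n \<Longrightarrow> i < n \<Longrightarrow> (A *\<^sub>v v) $ i = Av (\<lambda>j. v $ j) i"
  using A unfolding Av_def by (simp add: scalar_prod_def lessThan_atLeast0)

lemma vec_nonzero: "v \<in> carrier_vec n \<Longrightarrow> v \<noteq> 0\<^sub>v n \<Longrightarrow> \<exists>i<n. v $ i \<noteq> 0"
  by (metis carrier_vecD eq_vecI index_zero_vec(1) index_zero_vec(2))

lemma cnj_mult_self: "cnj z * z = complex_of_real ((cmod z)^2)"
  by (metis complex_norm_square mult.commute)

lemma char_poly_real_split: "\<exists>es. char_poly A = (\<Prod>e\<leftarrow>es. [:-e,1:]) \<and> length es = n"
proof -
  define Ac :: "complex mat" where "Ac = of_real_hom.mat_hom A"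
  have Ac: "Ac \<in> carrier_mat n n" using A unfolding Ac_def by auto
  have cpAc: "char_poly Ac = map_poly of_real (char_poly A)"
    unfolding Ac_def by (rule of_real_hom.char_poly_hom[OF A])
  obtain as where cp: "char_poly Ac = (\<Prod>a\<leftarrow>as. [:-a,1:])" and len: "length as = n"
    using char_poly_factorized[OF Ac] by blast
  have real: "Im a = 0" if a: "a \<in> set as" for a
  proof -
    have "poly (char_poly Ac) a = 0" unfolding cp using a by (rule linear_poly_root)
    hence "eigenvalue Ac a" using eigenvalue_root_char_poly[OF Ac] by simp
    then obtain v where ev: "eigenvector Ac v a" unfolding eigenvalue_def by blast
    have v: "v \<in> carrier_vec n" and v0: "v \<noteq> 0\<^sub>v n" and Av: "Ac *\<^sub>v v = a \<cdot>\<^sub>v v"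
      using ev Ac unfolding eigenvector_def by auto
    have comp: "(\<Sum>j<n. complex_of_real (A$$(i,j)) * v$j) = a * v$i" if "i < n" for i
    proof -
      have "(Ac *\<^sub>v v) $ i = (a \<cdot>\<^sub>v v) $ i" using Av by simp
      thus ?thesis using that Ac A v unfolding Ac_def by (simp add: scalar_prod_def lessThan_atLeast0)
    qed
    define s where "s = (\<Sum>i<n. \<Sum>j<n. complex_of_real (w i * A$$(i,j)) * cnj (v$i) * v$j)"
    define N where "N = (\<Sum>i<n. w i * (cmod (v$i))^2)"
    have s_eq: "s = a * complex_of_real N"
    proof -
      have "s = (\<Sum>i<n. complex_of_real (w i) * cnj (v$i) * (\<Sum>j<n. complex_of_real (A$$(i,j)) * v$j))"
        unfolding s_def by (simp add: sum_distrib_left ac_simps)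
      also have "\<dots> = (\<Sum>i<n. complex_of_real (w i) * cnj (v$i) * (a * v$i))"
        using comp by (intro sum.cong) auto
      also have "\<dots> = a * (\<Sum>i<n. complex_of_real (w i) * (cnj (v$i) * v$i))"
        by (simp add: sum_distrib_left ac_simps)
      also have "(\<Sum>i<n. complex_of_real (w i) * (cnj (v$i) * v$i)) = complex_of_real N"
        unfolding N_def cnj_mult_self by simp
      finally show ?thesis .
    qed
    have "cnj s = (\<Sum>i<n. \<Sum>j<n. complex_of_real (w i * A$$(i,j)) * v$i * cnj (v$j))"
      unfolding s_def by simp
    also have "\<dots> = (\<Sum>j<n. \<Sum>i<n. complex_of_real (w i * A$$(i,j)) * v$i * cnj (v$j))"
      by (rule sum.swap)
    also have "\<dots> = (\<Sum>j<n. \<Sum>i<n. complex_of_real (w j * A$$(j,i)) * cnj (v$j) * v$i)"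
      using sym by (intro sum.cong refl) (auto simp: ac_simps)
    also have "\<dots> = s" unfolding s_def ..
    finally have cs: "cnj s = s" .
    have "Im (cnj s) = - Im s" by simp
    hence "Im s = - Im s" unfolding cs .
    hence ims: "Im s = 0" by simp
    obtain i where i: "i < n" "v $ i \<noteq> 0" using vec_nonzero[OF v v0] by blast
    have "0 < N" unfolding N_def
    proof (rule sum_pos2[of _ i])
      show "0 < w i * (cmod (v $ i))\<^sup>2" using wpos[OF i(1)] i(2) by simp
    qed (use i wpos in \<open>auto simp: less_imp_le\<close>)
    moreover have "Im s = Im a * N" using s_eq by simp
    ultimately show ?thesis using ims by simp
  qed
  define es where "es = map Re as"
  interpret mp: map_poly_comm_ring_hom "of_real :: real \<Rightarrow> complex" ..
  have "map_poly of_real (\<Prod>e\<leftarrow>es. [:-e,1:]) = (\<Prod>e\<leftarrow>es. map_poly (of_real :: real \<Rightarrow> complex) [:-e,1:])"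
    by (simp add: mp.hom_prod_list o_def)
  also have "\<dots> = (\<Prod>a\<leftarrow>as. [:-a,1:])"
  proof -
    have m: "map (\<lambda>x. [:- complex_of_real (Re x), 1:]) as = map (\<lambda>a. [:-a,1:]) as"
      using real by (intro map_cong refl) (simp add: complex_eq_iff)
    have "(\<Prod>e\<leftarrow>es. map_poly (of_real :: real \<Rightarrow> complex) [:-e,1:]) = prod_list (map (\<lambda>x. [:- complex_of_real (Re x), 1:]) as)"
      unfolding es_def by (simp add: o_def)
    also have "\<dots> = (\<Prod>a\<leftarrow>as. [:-a,1:])" by (simp only: m)
    finally show ?thesis .
  qed
  finally have eq: "map_poly of_real (\<Prod>e\<leftarrow>es. [:-e,1:]) = map_poly (of_real :: real \<Rightarrow> complex) (char_poly A)"
    using cp cpAc by simp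
  have "char_poly A = (\<Prod>e\<leftarrow>es. [:-e,1:])"
  proof (rule poly_eqI)
    fix k show "coeff (char_poly A) k = coeff (\<Prod>e\<leftarrow>es. [:-e,1:]) k"
      using arg_cong[OF eq, of "\<lambda>p. coeff p k"] by (simp add: coeff_map_poly)
  qed
  moreover have "length es = n" using len unfolding es_def by simp
  ultimately show ?thesis by blast
qed

end

lemma quad_zero:
  fixes a b :: real
  assumes "\<And>t. a * t + b * t^2 \<le> 0"
  shows "a = 0"
proof (rule ccontr)
  assume a: "a \<noteq> 0"
  define c where "c = \<bar>b\<bar> + 1"
  have c: "0 < c" unfolding c_def by simp
  define t where "t = a / (2 * c)"
  have t2: "0 \<le> t^2" by simp
  have "- c * t^2 \<le> b * t^2" using t2 unfolding c_def by (intro mult_right_mono) auto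
  moreover have "c * t^2 = a^2 / (4 * c)" unfolding t_def using c by (simp add: power2_eq_square field_simps)
  moreover have "a * t = a^2 / (2 * c)" unfolding t_def using c by (simp add: power2_eq_square field_simps)
  moreover have "0 < a^2 / (4 * c)" using a c by simp
  moreover have "a^2 / (2 * c) = 2 * (a^2 / (4 * c))" using c by (simp add: field_simps)
  ultimately have "0 < a * t + b * t^2" by linarith
  thus False using assms[of t] by simp
qed

locale stoch = wsym +
  assumes nonneg: "\<And>i j. i < n \<Longrightarrow> j < n \<Longrightarrow> 0 \<le> A $$ (i,j)"
    and rows: "\<And>i. i < n \<Longrightarrow> (\<Sum>j<n. A $$ (i,j)) = 1"
    and conn: "\<And>f i j. (\<And>i j. i < n \<Longrightarrow> j < n \<Longrightarrow> A $$ (i,j) \<noteq> 0 \<Longrightarrow> f i = (f j :: real))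
                \<Longrightarrow> i < n \<Longrightarrow> j < n \<Longrightarrow> f i = f j"
    and npos: "0 < n"
begin

abbreviation one :: "nat \<Rightarrow> real" where "one \<equiv> \<lambda>_. 1"
definition Z :: real where "Z = ip one one"

lemma Av_one: "i < n \<Longrightarrow> Av one i = 1"
  unfolding Av_def using rows by simp

lemma Z_pos: "0 < Z"
  unfolding Z_def using ip_pos[of 0 one] npos by simp

lemma ip_Av_one: "ip (Av f) one = ip f one"
proof -
  have "ip (Av f) one = ip f (Av one)" by (rule ip_Av)
  also have "\<dots> = ip (Av one) f" by (rule ip_comm)
  also have "\<dots> = ip one f" using Av_one by (intro ip_cong) auto
  finally show ?thesis by (simp add: ip_comm)
qed

lemma Q_one: "Q one = Z"
  unfolding Q_def Z_def using Av_one by (intro ip_cong) auto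

lemma gap: "ip f f - Q f = (\<Sum>i<n. \<Sum>j<n. w i * A$$(i,j) * (f i - f j)^2) / 2"
proof -
  have e1: "(\<Sum>i<n. \<Sum>j<n. w i * A$$(i,j) * (f i)^2) = ip f f"
  proof -
    have "(\<Sum>i<n. \<Sum>j<n. w i * A$$(i,j) * (f i)^2) = (\<Sum>i<n. w i * (f i)^2 * (\<Sum>j<n. A$$(i,j)))"
      by (simp add: sum_distrib_left ac_simps)
    also have "\<dots> = ip f f" unfolding ip_def using rows by (intro sum.cong) (auto simp: power2_eq_square)
    finally show ?thesis .
  qed
  have e2: "(\<Sum>i<n. \<Sum>j<n. w i * A$$(i,j) * (f j)^2) = ip f f"
  proof -
    have "(\<Sum>i<n. \<Sum>j<n. w i * A$$(i,j) * (f j)^2) = (\<Sum>j<n. \<Sum>i<n. w i * A$$(i,j) * (f j)^2)"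
      by (rule sum.swap)
    also have "\<dots> = (\<Sum>j<n. \<Sum>i<n. w j * A$$(j,i) * (f j)^2)"
      using sym by (intro sum.cong refl) auto
    finally show ?thesis using e1 by simp
  qed
  have e3: "(\<Sum>i<n. \<Sum>j<n. w i * A$$(i,j) * (f i * f j)) = Q f"
    unfolding Q_def ip_def Av_def by (simp add: sum_distrib_left sum_distrib_right ac_simps)
  have t: "w i * A$$(i,j) * (f i - f j)^2 = w i * A$$(i,j) * (f i)^2 + w i * A$$(i,j) * (f j)^2 - 2 * (w i * A$$(i,j) * (f i * f j))" for i j
    by (simp add: power2_diff algebra_simps)
  have "(\<Sum>i<n. \<Sum>j<n. w i * A$$(i,j) * (f i - f j)^2) =
     (\<Sum>i<n. \<Sum>j<n. w i * A$$(i,j) * (f i)^2) + (\<Sum>i<n. \<Sum>j<n. w i * A$$(i,j) * (f j)^2)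
      - 2 * (\<Sum>i<n. \<Sum>j<n. w i * A$$(i,j) * (f i * f j))"
    unfolding t by (simp add: sum.distrib sum_subtractf sum_distrib_left)
  thus ?thesis using e1 e2 e3 by simp
qed

lemma gap_term_nn: "i < n \<Longrightarrow> j < n \<Longrightarrow> 0 \<le> w i * A$$(i,j) * (f i - f j)^2"
  using wpos[of i] nonneg[of i j] by simp

lemma Q_le: "Q f \<le> ip f f"
proof -
  have "0 \<le> (\<Sum>i<n. \<Sum>j<n. w i * A$$(i,j) * (f i - f j)^2)"
    using gap_term_nn by (intro sum_nonneg) auto
  thus ?thesis using gap[of f] by simp
qed

lemma Q_eq_const: assumes "Q f = ip f f" "i < n" "j < n" shows "f i = f j"
proof (rule conn[OF _ assms(2,3)])
  fix i j assume ij: "i < n" "j < n" "A $$ (i,j) \<noteq> 0"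
  have s0: "(\<Sum>i<n. \<Sum>j<n. w i * A$$(i,j) * (f i - f j)^2) = 0" using gap[of f] assms(1) by simp
  have "\<forall>i\<in>{..<n}. (\<Sum>j<n. w i * A$$(i,j) * (f i - f j)^2) = 0"
    using s0 by (subst sum_nonneg_eq_0_iff[symmetric]) (auto intro!: sum_nonneg gap_term_nn)
  hence "(\<Sum>j<n. w i * A$$(i,j) * (f i - f j)^2) = 0" using ij by blast
  hence "\<forall>j\<in>{..<n}. w i * A$$(i,j) * (f i - f j)^2 = 0"
    by (subst sum_nonneg_eq_0_iff[symmetric]) (use ij gap_term_nn in auto)
  hence "w i * A$$(i,j) * (f i - f j)^2 = 0" using ij by blast
  thus "f i = f j" using ij wpos[of i] by simp
qed

lemma ip_eig: "(\<And>i. i < n \<Longrightarrow> Av g i = e * g i) \<Longrightarrow> Q g = e * ip g g"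
proof -
  assume ev: "\<And>i. i < n \<Longrightarrow> Av g i = e * g i"
  have "Q g = ip (\<lambda>i. e * g i) g" unfolding Q_def using ev by (intro ip_cong) auto
  thus ?thesis by (simp add: ip_scale_left)
qed

lemma eig_lt1:
  assumes ev: "\<And>i. i < n \<Longrightarrow> Av g i = e * g i" and nz: "i0 < n" "g i0 \<noteq> 0"
    and orth: "ip g one = 0"
  shows "e < 1"
proof -
  have p: "0 < ip g g" using ip_pos[of i0 g] nz by simp
  have q: "Q g = e * ip g g" using ip_eig[OF ev] .
  have "e * ip g g \<le> 1 * ip g g" using Q_le[of g] q by simp
  hence le: "e \<le> 1" using p by (simp add: mult_le_cancel_right)
  show ?thesis
  proof (rule ccontr)
    assume "\<not> e < 1" hence e1: "e = 1" using le by simp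
    hence "Q g = ip g g" using q by simp
    hence c: "g i = g i0" if "i < n" for i using Q_eq_const that nz(1) by blast
    have "ip g one = ip (\<lambda>i. g i0 * one i) one" using c by (intro ip_cong) auto
    also have "\<dots> = g i0 * Z" unfolding Z_def by (rule ip_scale_left)
    finally have "g i0 * Z = 0" using orth by simp
    thus False using Z_pos nz by simp
  qed
qed

lemma shifted:
  assumes RB: "\<And>g. ip g one = 0 \<Longrightarrow> Q g \<le> \<mu> * ip g g"
  shows "Q f \<le> \<mu> * ip f f + (1 - \<mu>) * (ip f one)^2 / Z"
proof -
  define c where "c = ip f one / Z"
  define h where "h = (\<lambda>i. f i + (-c) * one i)"
  have hone: "ip h one = 0" unfolding h_def ip_add_left c_def using Z_pos by (simp add: Z_def)
  have fh: "f = (\<lambda>i. h i + c * one i)" unfolding h_def by simp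
  have Qf: "Q f = Q h + c^2 * Z"
    unfolding fh Q_add using ip_Av_one[of h] hone Q_one by simp
  have ipf: "ip f f = ip h h + c^2 * Z"
    unfolding fh ip_add_both using hone Z_def by simp
  have "Q f \<le> \<mu> * ip h h + c^2 * Z" using Qf RB[OF hone] by simp
  also have "\<dots> = \<mu> * ip f f + (1 - \<mu>) * (c^2 * Z)" using ipf by (simp add: algebra_simps)
  also have "c^2 * Z = (ip f one)^2 / Z" unfolding c_def using Z_pos by (simp add: power2_eq_square)
  finally show ?thesis by simp
qed

end

lemma coord_cont: "continuous_on S (\<lambda>x::nat\<Rightarrow>real. x i)"
  by (rule continuous_on_subset[OF continuous_on_product_coordinates]) simp

lemma compact_box: "compact (Pi\<^sub>E UNIV (\<lambda>i. if i < (n::nat) then {-R..R} else {0::real}))"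
proof -
  have "compactin (product_topology (\<lambda>i. euclidean) UNIV) (Pi\<^sub>E UNIV (\<lambda>i. if i < n then {-R..R} else {0::real}))"
    by (subst compactin_PiE) (auto simp: compactin_euclidean_iff)
  thus ?thesis unfolding euclidean_product_topology compactin_euclidean_iff .
qed

lemma abs_le_1_sq: "\<bar>x::real\<bar> \<le> 1 + x^2"
proof (cases "\<bar>x\<bar> \<le> 1")
  case True
  have "0 \<le> x^2" by simp
  thus ?thesis using True by linarith
next
  case False
  have "\<bar>x\<bar> * 1 \<le> \<bar>x\<bar> * \<bar>x\<bar>" using False by (intro mult_left_mono) auto
  also have "\<bar>x\<bar> * \<bar>x\<bar> = x^2" by (simp add: power2_eq_square)
  finally show ?thesis by simp
qed

context stoch begin


lemma rayleigh_from_eigen: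
  assumes H: "\<And>g e i0. (\<And>i. i < n \<Longrightarrow> Av g i = e * g i) \<Longrightarrow> i0 < n \<Longrightarrow> g i0 \<noteq> 0
                 \<Longrightarrow> ip g one = 0 \<Longrightarrow> e \<le> \<mu>"
    and f: "ip f one = 0"
  shows "Q f \<le> \<mu> * ip f f"
proof (cases "ip f f = 0")
  case True
  have "Q f = Q (\<lambda>_. 0)" using ip_zero[OF True] by (intro Q_cong) auto
  also have "\<dots> = 0" unfolding Q_def ip_def by simp
  finally show ?thesis using True by simp
next
  case False
  have pf: "0 < ip f f" using False ip_nonneg[of f] by simp
  define K where "K = {g. (\<forall>i. n \<le> i \<longrightarrow> g i = 0) \<and> ip g g = 1 \<and> ip g one = 0}"
  define R where "R = 1 + (\<Sum>i<n. 1 / w i)"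
  define Box where "Box = Pi\<^sub>E UNIV (\<lambda>i. if i < n then {-R..R} else {0::real})"
  have KB: "K \<subseteq> Box"
  proof
    fix g assume g: "g \<in> K"
    have "g i \<in> (if i < n then {-R..R} else {0})" for i
    proof (cases "i < n")
      case True
      have "w i * g i * g i \<le> ip g g"
        unfolding ip_def using True ip_term_nn by (intro member_le_sum) auto
      hence "w i * (g i)^2 \<le> 1" using g unfolding K_def by (simp add: power2_eq_square mult.assoc)
      hence "(g i)^2 \<le> 1 / w i" using wpos[OF True] by (simp add: field_simps)
      moreover have "1 / w i \<le> (\<Sum>i<n. 1 / w i)"
        using True wpos by (intro member_le_sum) (auto simp: less_imp_le)
      ultimately have "\<bar>g i\<bar> \<le> R" unfolding R_def using abs_le_1_sq[of "g i"] by linarith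
      thus ?thesis using True by auto
    next
      case False thus ?thesis using g unfolding K_def by auto
    qed
    thus "g \<in> Box" unfolding Box_def by auto
  qed
  have ipc: "continuous_on S (\<lambda>g::nat\<Rightarrow>real. ip g g)" for S
    unfolding ip_def by (intro continuous_intros coord_cont)
  have ipc1: "continuous_on S (\<lambda>g::nat\<Rightarrow>real. ip g one)" for S
    unfolding ip_def by (intro continuous_intros coord_cont)
  have Qc: "continuous_on S Q" for S
    unfolding Q_def ip_def Av_def by (intro continuous_intros coord_cont)
  have closedK: "closed K"
  proof -
    have "K = (\<Inter>i\<in>{n..}. {g. g i = 0}) \<inter> {g. ip g g = 1} \<inter> {g. ip g one = 0}"
      unfolding K_def by auto
    moreover have "closed (\<Inter>i\<in>{n..}. {g::nat\<Rightarrow>real. g i = 0})"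
      by (intro closed_INT ballI closed_Collect_eq coord_cont continuous_on_const)
    moreover have "closed {g. ip g g = 1}" by (intro closed_Collect_eq ipc continuous_on_const)
    moreover have "closed {g. ip g one = 0}" by (intro closed_Collect_eq ipc1 continuous_on_const)
    ultimately show ?thesis by (simp add: closed_Int)
  qed
  have compK: "compact K"
  proof -
    have "compact (K \<inter> Box)" unfolding Box_def by (intro closed_Int_compact closedK compact_box)
    thus ?thesis using KB by (simp add: Int_absorb2)
  qed
  define nrm where "nrm = (\<lambda>g::nat\<Rightarrow>real. \<lambda>i. if i < n then (1 / sqrt (ip g g)) * g i else 0)"
  have nrmK: "nrm g \<in> K" if "ip g one = 0" "0 < ip g g" for g
  proof -
    have a: "ip (nrm g) h = ip (\<lambda>i. (1 / sqrt (ip g g)) * g i) h" for h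
      unfolding nrm_def by (intro ip_cong) auto
    have "ip (nrm g) (nrm g) = ip (\<lambda>i. (1 / sqrt (ip g g)) * g i) (\<lambda>i. (1 / sqrt (ip g g)) * g i)"
      using a ip_comm by metis
    also have "\<dots> = 1" unfolding ip_scale_both using that by (simp add: power_divide)
    finally have "ip (nrm g) (nrm g) = 1" .
    moreover have "ip (nrm g) one = 0" unfolding a ip_scale_left using that by simp
    ultimately show ?thesis unfolding K_def nrm_def by auto
  qed
  have Qnrm: "Q (nrm g) = Q g / ip g g" if "0 < ip g g" for g
  proof -
    have "Q (nrm g) = Q (\<lambda>i. (1 / sqrt (ip g g)) * g i)" unfolding nrm_def by (intro Q_cong) auto
    also have "\<dots> = Q g / ip g g" unfolding Q_scale using that by (simp add: power_divide)
    finally show ?thesis .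
  qed
  have Kne: "K \<noteq> {}" using nrmK[OF f pf] by auto
  obtain g0 where g0: "g0 \<in> K" and max: "\<And>g. g \<in> K \<Longrightarrow> Q g \<le> Q g0"
    using continuous_attains_sup[OF compK Kne Qc] by blast
  define M where "M = Q g0"
  have g0n: "ip g0 g0 = 1" "ip g0 one = 0" using g0 unfolding K_def by auto
  have maxall: "Q g \<le> M * ip g g" if "ip g one = 0" for g
  proof (cases "ip g g = 0")
    case True
    have "Q g = Q (\<lambda>_. 0)" using ip_zero[OF True] by (intro Q_cong) auto
    also have "\<dots> = 0" unfolding Q_def ip_def by simp
    finally show ?thesis using True by simp
  next
    case False
    hence p: "0 < ip g g" using ip_nonneg[of g] by simp
    have "Q g / ip g g \<le> M" using max[OF nrmK[OF that p]] Qnrm[OF p] unfolding M_def by simp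
    thus ?thesis using p by (simp add: field_simps)
  qed
  have var: "ip (Av g0) h = M * ip g0 h" if h: "ip h one = 0" for h
  proof -
    have "2 * (ip (Av g0) h - M * ip g0 h) = 0"
    proof (rule quad_zero)
      fix t
      have o: "ip (\<lambda>i. g0 i + t * h i) one = 0" unfolding ip_add_left using g0n h by simp
      have "Q (\<lambda>i. g0 i + t * h i) \<le> M * ip (\<lambda>i. g0 i + t * h i) (\<lambda>i. g0 i + t * h i)"
        by (rule maxall[OF o])
      thus "2 * (ip (Av g0) h - M * ip g0 h) * t + (Q h - M * ip h h) * t^2 \<le> 0"
        unfolding Q_add ip_add_both g0n(1) M_def[symmetric] by (simp add: algebra_simps)
    qed
    thus ?thesis by simp
  qed
  define r where "r = (\<lambda>i. Av g0 i + (- M) * g0 i)"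
  have r1: "ip r one = 0" unfolding r_def ip_add_left ip_Av_one using g0n by simp
  have "ip r r = ip (Av g0) r + (- M) * ip g0 r" unfolding r_def[of] by (simp only: ip_add_left)
  hence "ip r r = 0" using var[OF r1] by simp
  hence ev: "Av g0 i = M * g0 i" if "i < n" for i using ip_zero[of r i] that unfolding r_def by simp
  obtain i0 where i0: "i0 < n" "g0 i0 \<noteq> 0"
  proof (rule ccontr)
    assume "\<not> thesis"
    hence "\<forall>i<n. g0 i = 0" using that by blast
    hence "ip g0 g0 = 0" unfolding ip_def by simp
    thus False using g0n by simp
  qed
  have "M \<le> \<mu>" by (rule H[OF ev i0 g0n(2)])
  hence "M * ip f f \<le> \<mu> * ip f f" using pf by (simp add: mult_right_mono)
  thus ?thesis using maxall[OF f] by simp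
qed

end

context stoch begin

lemma ip_cong2: "(\<And>i. i < n \<Longrightarrow> f i = f' i) \<Longrightarrow> (\<And>i. i < n \<Longrightarrow> g i = g' i) \<Longrightarrow> ip f g = ip f' g'"
  unfolding ip_def by (intro sum.cong) auto

lemma rb_from_garland:
  assumes G: "\<And>g. Q g \<le> \<mu> * ip g g + (1 - \<mu>) * ip (Av g) (Av g)"
    and mu: "\<mu> < 1" and f: "ip f one = 0"
  shows "Q f \<le> \<mu> / (1 - \<mu>) * ip f f"
proof (rule rayleigh_from_eigen[OF _ f])
  fix g e i0
  assume ev: "\<And>i. i < n \<Longrightarrow> Av g i = e * g i" and nz: "i0 < n" "g i0 \<noteq> 0" and o: "ip g one = 0"
  have e1: "e < 1" by (rule eig_lt1[OF ev nz o])
  have p: "0 < ip g g" using ip_pos[of i0 g] nz by simp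
  have q: "Q g = e * ip g g" by (rule ip_eig[OF ev])
  have "ip (Av g) (Av g) = ip (\<lambda>i. e * g i) (\<lambda>i. e * g i)" using ev by (intro ip_cong2) auto
  also have "\<dots> = e^2 * ip g g" by (rule ip_scale_both)
  finally have a: "ip (Av g) (Av g) = e^2 * ip g g" .
  have "e * ip g g \<le> (\<mu> + (1 - \<mu>) * e^2) * ip g g" using G[of g] q a by (simp add: algebra_simps)
  hence "e \<le> \<mu> + (1 - \<mu>) * e^2" using p by (simp add: mult_le_cancel_right)
  hence "0 \<le> (1 - e) * (\<mu> - (1 - \<mu>) * e)" by (simp add: algebra_simps power2_eq_square)
  hence "0 \<le> \<mu> - (1 - \<mu>) * e" using e1 by (simp add: zero_le_mult_iff)
  thus "e \<le> \<mu> / (1 - \<mu>)" using mu by (simp add: field_simps)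
qed

definition Ldesc :: "real list" where
  "Ldesc = rev (sorted_list_of_multiset (proots (char_poly A)))"

lemma cp_nz: "char_poly A \<noteq> 0"
  using degree_monic_char_poly[OF A] by auto

lemma eig_root:
  assumes ev: "\<And>i. i < n \<Longrightarrow> Av g i = e * g i" and nz: "i0 < n" "g i0 \<noteq> 0"
  shows "poly (char_poly A) e = 0"
proof -
  define v where "v = vec n g"
  have v: "v \<in> carrier_vec n" unfolding v_def by simp
  have v0: "v \<noteq> 0\<^sub>v n" using nz unfolding v_def by (metis index_vec index_zero_vec(1))
  have "A *\<^sub>v v = e \<cdot>\<^sub>v v"
  proof (rule eq_vecI)
    fix i assume "i < dim_vec (e \<cdot>\<^sub>v v)"
    hence i: "i < n" using v by simp
    have Avv: "Av (\<lambda>j. v $ j) = Av g" by (rule Av_cong) (simp add: v_def)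
    have "(A *\<^sub>v v) $ i = Av (\<lambda>j. v $ j) i" by (rule mult_vec_Av[OF v i])
    also have "\<dots> = Av g i" by (simp only: Avv)
    also have "\<dots> = (e \<cdot>\<^sub>v v) $ i" using ev[OF i] i unfolding v_def by simp
    finally show "(A *\<^sub>v v) $ i = (e \<cdot>\<^sub>v v) $ i" .
  qed (use A v in auto)
  hence "eigenvector A v e" unfolding eigenvector_def using A v v0 by auto
  hence "eigenvalue A e" unfolding eigenvalue_def by blast
  thus ?thesis using eigenvalue_root_char_poly[OF A] by simp
qed

lemma sorted_second:
  assumes s: "sorted ys" and x: "x \<in> set ys" and y: "y \<in> set ys" and xy: "x \<noteq> y"
  shows "min x y \<le> rev ys ! 1"
proof -
  obtain i where i: "i < length ys" "ys ! i = x" using x by (auto simp: in_set_conv_nth)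
  obtain j where j: "j < length ys" "ys ! j = y" using y by (auto simp: in_set_conv_nth)
  have ij: "i \<noteq> j" using i j xy by auto
  define m where "m = length ys"
  have m2: "2 \<le> m" using i j ij unfolding m_def by linarith
  have r: "rev ys ! 1 = ys ! (m - 2)" unfolding m_def using m2 by (simp add: rev_nth m_def numeral_2_eq_2)
  have "min i j \<le> m - 2" using i j ij unfolding m_def by linarith
  hence "ys ! (min i j) \<le> ys ! (m - 2)" using sorted_nth_mono[OF s] m2 unfolding m_def by simp
  moreover have "min x y \<le> ys ! (min i j)" using i j by (cases "i \<le> j") (auto simp: min_def)
  ultimately show ?thesis using r by simp
qed

lemma base_RB:
  assumes L: "Ldesc ! 1 \<le> \<mu>" and mu: "\<mu> < 1" and f: "ip f one = 0"
  shows "Q f \<le> \<mu> * ip f f"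
proof (rule rayleigh_from_eigen[OF _ f])
  fix g e i0
  assume ev: "\<And>i. i < n \<Longrightarrow> Av g i = e * g i" and nz: "i0 < n" "g i0 \<noteq> 0" and o: "ip g one = 0"
  have e1: "e < 1" by (rule eig_lt1[OF ev nz o])
  show "e \<le> \<mu>"
  proof (rule ccontr)
    assume "\<not> e \<le> \<mu>"
    hence emu: "\<mu> < e" by simp
    have re: "poly (char_poly A) e = 0" by (rule eig_root[OF ev nz])
    have r1: "poly (char_poly A) 1 = 0"
      by (rule eig_root[of one 1 0]) (use Av_one npos in auto)
    let ?ys = "sorted_list_of_multiset (proots (char_poly A))"
    have "e \<in> set ?ys" "1 \<in> set ?ys"
      using re r1 cp_nz by (auto simp: set_sorted_list_of_multiset set_count_proots)
    hence "min e 1 \<le> rev ?ys ! 1" using e1 by (intro sorted_second) auto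
    hence "e \<le> Ldesc ! 1" using e1 unfolding Ldesc_def by simp
    thus False using L emu by simp
  qed
qed

end

context stoch begin

lemma mat_mult_sum: "P \<in> carrier_mat n n \<Longrightarrow> R \<in> carrier_mat n n \<Longrightarrow> i < n \<Longrightarrow> j < n \<Longrightarrow>
   (P * R) $$ (i,j) = (\<Sum>k<n. P $$ (i,k) * R $$ (k,j))"
  by (simp add: scalar_prod_def lessThan_atLeast0)

lemma mat_vec_sum: "P \<in> carrier_mat n n \<Longrightarrow> v \<in> carrier_vec n \<Longrightarrow> i < n \<Longrightarrow>
   (P *\<^sub>v v) $ i = (\<Sum>k<n. P $$ (i,k) * v $ k)"
  by (simp add: scalar_prod_def lessThan_atLeast0)

lemma block_decomp:
  "\<exists>p3. char_poly A = [:-1,1:] * p3 \<and>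
     (\<forall>e. poly p3 e = 0 \<longrightarrow> (\<exists>g i0. (\<forall>i<n. Av g i = e * g i) \<and> i0 < n \<and> g i0 \<noteq> 0 \<and> ip g one = 0))"
proof -
  obtain m where nm: "n = Suc m" using npos by (cases n) auto
  have w0: "0 < w 0" using wpos npos by simp
  have Zs: "Z = (\<Sum>k<n. w k)" unfolding Z_def ip_def by simp
  have Zp: "0 < Z" by (rule Z_pos)
  define W :: "real mat" where "W = mat n n (\<lambda>(i,j). if j = 0 then 1 else if i = j then 1 else if i = 0 then - w j / w 0 else 0)"
  define Wi :: "real mat" where "Wi = mat n n (\<lambda>(i,j). if i = 0 then w j / Z else (if i = j then 1 else 0) - w j / Z)"
  have W: "W \<in> carrier_mat n n" unfolding W_def by (rule mat_carrier)
  have Wi: "Wi \<in> carrier_mat n n" unfolding Wi_def by (rule mat_carrier)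
  have Wij: "W $$ (i,j) = (if j = 0 then 1 else if i = j then 1 else if i = 0 then - w j / w 0 else 0)"
    if "i < n" "j < n" for i j using that unfolding W_def by simp
  have Wiij: "Wi $$ (i,j) = (if i = 0 then w j / Z else (if i = j then 1 else 0) - w j / Z)"
    if "i < n" "j < n" for i j using that unfolding Wi_def by simp
  have colW: "(\<Sum>k<n. w k * W$$(k,j)) = (if j = 0 then Z else 0)" if j: "j < n" for j
  proof (cases "j = 0")
    case True
    have "(\<Sum>k<n. w k * W$$(k,j)) = (\<Sum>k<n. w k)" using True j by (intro sum.cong refl) (simp add: Wij)
    thus ?thesis using Zs True by simp
  next
    case False
    have "(\<Sum>k<n. w k * W$$(k,j)) = (\<Sum>k<n. (if k = j then w j else 0) + (if k = 0 then - w j else 0))"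
      using False j w0 by (intro sum.cong refl) (simp add: Wij)
    also have "\<dots> = 0" using j npos by (simp add: sum.distrib)
    finally show ?thesis using False by simp
  qed
  have WiW: "Wi * W = 1\<^sub>m n"
  proof (rule eq_matI)
    fix i j assume ij: "i < dim_row (1\<^sub>m n)" "j < dim_col (1\<^sub>m n)"
    hence i: "i < n" and j: "j < n" by auto
    have e: "(Wi * W) $$ (i,j) = (\<Sum>k<n. Wi $$ (i,k) * W $$ (k,j))" by (rule mat_mult_sum[OF Wi W i j])
    show "(Wi * W) $$ (i,j) = 1\<^sub>m n $$ (i,j)"
    proof (cases "i = 0")
      case True
      have "(\<Sum>k<n. Wi $$ (i,k) * W $$ (k,j)) = (\<Sum>k<n. w k * W$$(k,j) / Z)"
        using True i by (intro sum.cong refl) (simp add: Wiij)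
      also have "\<dots> = (\<Sum>k<n. w k * W$$(k,j)) / Z" by (simp add: sum_divide_distrib)
      finally have "(\<Sum>k<n. Wi $$ (i,k) * W $$ (k,j)) = (\<Sum>k<n. w k * W$$(k,j)) / Z" .
      thus ?thesis using e colW[OF j] Zp True i j by auto
    next
      case False
      have "(\<Sum>k<n. Wi $$ (i,k) * W $$ (k,j)) = (\<Sum>k<n. (if i = k then W$$(k,j) else 0) - w k * W$$(k,j) / Z)"
        using False i by (intro sum.cong refl) (simp add: Wiij algebra_simps)
      also have "\<dots> = W$$(i,j) - (\<Sum>k<n. w k * W$$(k,j)) / Z"
        using i by (simp add: sum_subtractf sum_divide_distrib)
      finally have "(Wi * W) $$ (i,j) = W$$(i,j) - (if j = 0 then Z else 0) / Z" using e colW[OF j] by simp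
      thus ?thesis using False i j Zp by (simp add: Wij)
    qed
  qed (use W Wi in auto)
  have WWi: "W * Wi = 1\<^sub>m n" by (rule mat_mult_left_right_inverse[OF Wi W WiW])
  define B where "B = Wi * A * W"
  have B: "B \<in> carrier_mat n n" unfolding B_def using Wi A W by auto
  have simB: "similar_mat B A"
    unfolding similar_mat_def similar_mat_wit_def Let_def
    by (rule exI[of _ Wi], rule exI[of _ W]) (use B A Wi W WiW WWi in \<open>auto simp: B_def\<close>)
  have cpB: "char_poly B = char_poly A" by (rule char_poly_similar[OF simB])
  have AW0: "(A * W) $$ (k,0) = 1" if "k < n" for k
  proof -
    have "(A * W) $$ (k,0) = (\<Sum>l<n. A $$ (k,l) * W $$ (l,0))" by (rule mat_mult_sum[OF A W that npos])
    also have "\<dots> = (\<Sum>l<n. A $$ (k,l))" using npos by (intro sum.cong refl) (simp add: Wij)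
    finally show ?thesis using rows[OF that] by simp
  qed
  have AW: "A * W \<in> carrier_mat n n" using A W by auto
  have Bcol0: "B $$ (i,0) = (if i = 0 then 1 else 0)" if i: "i < n" for i
  proof -
    have "B = Wi * (A * W)" unfolding B_def by (rule assoc_mult_mat[OF Wi A W])
    hence "B $$ (i,0) = (\<Sum>k<n. Wi $$ (i,k) * (A * W) $$ (k,0))" using mat_mult_sum[OF Wi AW i npos] by simp
    also have "\<dots> = (\<Sum>k<n. Wi $$ (i,k))" using AW0 by (intro sum.cong) auto
    also have "\<dots> = (if i = 0 then 1 else 0)"
    proof (cases "i = 0")
      case True
      have "(\<Sum>k<n. Wi $$ (i,k)) = (\<Sum>k<n. w k / Z)" using True i by (intro sum.cong refl) (simp add: Wiij)
      also have "\<dots> = 1" using Zs Zp by (simp add: sum_divide_distrib[symmetric])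
      finally show ?thesis using True by simp
    next
      case False
      have "(\<Sum>k<n. Wi $$ (i,k)) = (\<Sum>k<n. (if i = k then 1 else 0) - w k / Z)"
        using False i by (intro sum.cong refl) (simp add: Wiij)
      also have "\<dots> = 1 - (\<Sum>k<n. w k) / Z" using i by (simp add: sum_subtractf sum_divide_distrib)
      finally show ?thesis using False Zs Zp by simp
    qed
    finally show ?thesis .
  qed
  obtain B1 B2 B0 B3 where sb: "split_block B 1 1 = (B1, B2, B0, B3)" by (cases "split_block B 1 1") auto
  have dB: "dim_row B = 1 + m" "dim_col B = 1 + m" using B nm by auto
  note spl = split_block[OF sb dB]
  have B1: "B1 \<in> carrier_mat 1 1" and B2: "B2 \<in> carrier_mat 1 m" and B3: "B3 \<in> carrier_mat m m"
    using spl by auto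
  have B1id: "B1 = mat 1 1 (\<lambda>_. 1)"
    using sb Bcol0[OF npos] dB unfolding split_block_def Let_def by (auto intro!: eq_matI)
  have B0id: "B0 = 0\<^sub>m m 1"
    using sb Bcol0 nm dB unfolding split_block_def Let_def by (auto intro!: eq_matI)
  have B3id: "B3 $$ (i,j) = B $$ (Suc i, Suc j)" if "i < m" "j < m" for i j
    using sb that dB unfolding split_block_def Let_def by auto
  have cpB1: "char_poly B1 = [:-1,1:]"
    by (simp add: B1id char_poly_defs det_def sign_def)
  have "char_poly A = char_poly B1 * char_poly B3"
    using cpB spl char_poly_four_block_zeros_col[OF B1 B2 B3] unfolding B0id by metis
  hence cpA: "char_poly A = [:-1,1:] * char_poly B3" using cpB1 by simp
  show ?thesis
  proof (rule exI[of _ "char_poly B3"], intro conjI cpA allI impI)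
    fix e assume "poly (char_poly B3) e = 0"
    hence "eigenvalue B3 e" using eigenvalue_root_char_poly[OF B3] by simp
    then obtain y where ev: "eigenvector B3 y e" unfolding eigenvalue_def by blast
    have y: "y \<in> carrier_vec m" and y0: "y \<noteq> 0\<^sub>v m" and By: "B3 *\<^sub>v y = e \<cdot>\<^sub>v y"
      using ev B3 unfolding eigenvector_def by auto
    define yv where "yv = vec n (\<lambda>i. if i = 0 then 0 else y $ (i - 1))"
    have yv: "yv \<in> carrier_vec n" unfolding yv_def by simp
    define c where "c = (B *\<^sub>v yv) $ 0"
    have Byv: "(B *\<^sub>v yv) $ k = e * yv $ k + (if k = 0 then c else 0)" if k: "k < n" for k
    proof (cases "k = 0")
      case True thus ?thesis unfolding c_def yv_def using npos by simp
    next
      case False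
      then obtain k' where k': "k = Suc k'" by (cases k) auto
      have k'm: "k' < m" using k k' nm by simp
      have "(B *\<^sub>v yv) $ k = (\<Sum>j<n. B $$ (k,j) * yv $ j)" by (rule mat_vec_sum[OF B yv k])
      also have "\<dots> = (\<Sum>j<m. B $$ (k, Suc j) * yv $ Suc j)"
        unfolding nm sum.lessThan_Suc_shift using nm by (simp add: yv_def)
      also have "\<dots> = (\<Sum>j<m. B3 $$ (k', j) * y $ j)"
        using k'm nm by (intro sum.cong refl) (auto simp: yv_def B3id k')
      also have "\<dots> = (B3 *\<^sub>v y) $ k'" using B3 y k'm by (simp add: scalar_prod_def lessThan_atLeast0)
      also have "\<dots> = e * y $ k'" using By y k'm by simp
      finally show ?thesis using k' k False unfolding yv_def by simp
    qed
    define gv where "gv = W *\<^sub>v yv"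
    have gv: "gv \<in> carrier_vec n" unfolding gv_def using W yv by auto
    define g where "g = (\<lambda>i. gv $ i)"
    have AWB: "A * W = W * B"
    proof -
      have "W * B = W * (Wi * A * W)" unfolding B_def ..
      also have "\<dots> = (W * Wi) * A * W"
        using W Wi A by (simp add: assoc_mult_mat[of _ n n _ n _ n])
      also have "\<dots> = A * W" using WWi A W by simp
      finally show ?thesis by simp
    qed
    have Agv: "A *\<^sub>v gv = W *\<^sub>v (B *\<^sub>v yv)"
      unfolding gv_def using assoc_mult_mat_vec[OF A W yv] assoc_mult_mat_vec[OF W B yv] AWB by simp
    have Avg: "Av g i = e * g i + c" if i: "i < n" for i
    proof -
      have "Av g i = (A *\<^sub>v gv) $ i" unfolding g_def using mult_vec_Av[OF gv i] by simp
      also have "\<dots> = (\<Sum>k<n. W $$ (i,k) * (B *\<^sub>v yv) $ k)"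
        unfolding Agv using B yv by (intro mat_vec_sum[OF W _ i]) auto
      also have "\<dots> = (\<Sum>k<n. e * (W $$ (i,k) * yv $ k) + (if k = 0 then W $$ (i,k) * c else 0))"
        using Byv by (intro sum.cong refl) (auto simp: algebra_simps)
      also have "\<dots> = e * (\<Sum>k<n. W $$ (i,k) * yv $ k) + W $$ (i,0) * c"
        using npos by (simp add: sum.distrib sum_distrib_left)
      also have "(\<Sum>k<n. W $$ (i,k) * yv $ k) = g i"
        unfolding g_def gv_def using mat_vec_sum[OF W yv i] by simp
      also have "W $$ (i,0) = 1" using i npos by (simp add: Wij)
      finally show ?thesis by simp
    qed
    have gone: "ip g one = 0"
    proof -
      have "ip g one = (\<Sum>i<n. w i * (\<Sum>k<n. W $$ (i,k) * yv $ k))"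
        unfolding ip_def g_def gv_def using mat_vec_sum[OF W yv] by simp
      also have "\<dots> = (\<Sum>i<n. \<Sum>k<n. w i * W $$ (i,k) * yv $ k)"
        by (simp add: sum_distrib_left mult.assoc)
      also have "\<dots> = (\<Sum>k<n. \<Sum>i<n. w i * W $$ (i,k) * yv $ k)" by (rule sum.swap)
      also have "\<dots> = (\<Sum>k<n. yv $ k * (\<Sum>i<n. w i * W $$ (i,k)))"
        by (simp add: sum_distrib_left ac_simps)
      also have "\<dots> = (\<Sum>k<n. yv $ k * (if k = 0 then Z else 0))" using colW by (intro sum.cong) auto
      also have "\<dots> = 0" by (intro sum.neutral) (auto simp: yv_def)
      finally show ?thesis .
    qed
    have c0: "c = 0"
    proof -
      have "ip (Av g) one = ip (\<lambda>i. e * g i + c * 1) one" using Avg by (intro ip_cong) auto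
      also have "\<dots> = ip (\<lambda>i. e * g i) one + c * ip one one" by (rule ip_add_left)
      also have "ip (\<lambda>i. e * g i) one = e * ip g one" by (rule ip_scale_left)
      finally have "ip (Av g) one = e * ip g one + c * Z" unfolding Z_def .
      hence "c * Z = 0" using gone ip_Av_one[of g] by simp
      thus ?thesis using Zp by simp
    qed
    have ev': "\<forall>i<n. Av g i = e * g i" using Avg c0 by simp
    obtain i0 where i0: "i0 < n" "g i0 \<noteq> 0"
    proof (rule ccontr)
      assume "\<not> thesis"
      hence z: "\<forall>i<n. g i = 0" using that by blast
      have "gv = 0\<^sub>v n" using z gv unfolding g_def by (intro eq_vecI) auto
      hence "Wi *\<^sub>v gv = 0\<^sub>v n" using Wi
        by (intro eq_vecI) (auto simp: scalar_prod_def)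
      moreover have "Wi *\<^sub>v gv = yv"
        unfolding gv_def using assoc_mult_mat_vec[OF Wi W yv] WiW yv by simp
      ultimately have "yv = 0\<^sub>v n" by simp
      have "y $ j = 0" if j: "j < m" for j
      proof -
        have "yv $ Suc j = 0" using \<open>yv = 0\<^sub>v n\<close> j nm by simp
        thus ?thesis using j nm unfolding yv_def by simp
      qed
      hence "y = 0\<^sub>v m" using y by (intro eq_vecI) auto
      thus False using y0 by simp
    qed
    show "\<exists>g i0. (\<forall>i<n. Av g i = e * g i) \<and> i0 < n \<and> g i0 \<noteq> 0 \<and> ip g one = 0"
      using ev' i0 gone by blast
  qed
qed

lemma proots_lin_prod: "proots (\<Prod>e\<leftarrow>es. [:-e,1::real:]) = mset es"
proof (induction es)
  case Nil thus ?case by simp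
next
  case (Cons a es)
  have nz: "(\<Prod>e\<leftarrow>es. [:-e,1::real:]) \<noteq> 0" by (auto simp: prod_list_zero_iff)
  have eq: "(\<Prod>e\<leftarrow>a # es. [:-e,1::real:]) = [:-a,1:] * (\<Prod>e\<leftarrow>es. [:-e,1::real:])" by simp
  have pm: "proots ([:-a,1:] * (\<Prod>e\<leftarrow>es. [:-e,1::real:])) = proots [:-a,1:] + proots (\<Prod>e\<leftarrow>es. [:-e,1::real:])"
    by (rule proots_mult) (use nz in auto)
  show ?case unfolding eq pm proots_linear_factor Cons.IH by simp
qed

lemma final_L2:
  assumes n2: "2 \<le> n" and RB: "\<And>f. ip f one = 0 \<Longrightarrow> Q f \<le> \<mu> * ip f f"
  shows "Ldesc ! 1 \<le> \<mu>"
proof -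
  obtain p3 where cpA: "char_poly A = [:-1,1:] * p3"
    and ev3: "\<forall>e. poly p3 e = 0 \<longrightarrow> (\<exists>g i0. (\<forall>i<n. Av g i = e * g i) \<and> i0 < n \<and> g i0 \<noteq> 0 \<and> ip g one = 0)"
    using block_decomp by blast
  have p3nz: "p3 \<noteq> 0" using cp_nz cpA by auto
  have Mprop: "x \<le> \<mu> \<and> x < 1" if "x \<in># proots p3" for x
  proof -
    have "poly p3 x = 0" using that p3nz by (simp add: set_count_proots)
    then obtain g i0 where ev: "\<forall>i<n. Av g i = x * g i" and nz: "i0 < n" "g i0 \<noteq> 0" and o: "ip g one = 0"
      using ev3 by blast
    have x1: "x < 1" using eig_lt1[of g x i0] ev nz o by blast
    have p: "0 < ip g g" using ip_pos[of i0 g] nz by simp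
    have "x * ip g g \<le> \<mu> * ip g g" using RB[OF o] ip_eig[of g x] ev by simp
    hence "x \<le> \<mu>" using p by (simp add: mult_le_cancel_right)
    thus ?thesis using x1 by simp
  qed
  have pr: "proots (char_poly A) = add_mset 1 (proots p3)"
  proof -
    have "proots ([:-1,1:] * p3) = proots [:-1,1:] + proots p3"
      by (rule proots_mult) (use p3nz in auto)
    thus ?thesis unfolding cpA proots_linear_factor by simp
  qed
  obtain es where es: "char_poly A = (\<Prod>e\<leftarrow>es. [:-e,1:])" "length es = n"
    using char_poly_real_split by blast
  have sz: "size (proots (char_poly A)) = n" unfolding es(1) proots_lin_prod using es(2) by simp
  define ys where "ys = sorted_list_of_multiset (proots (char_poly A))"
  have ly: "length ys = n" unfolding ys_def using sz by (metis mset_sorted_list_of_multiset size_mset)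
  have sy: "sorted ys" unfolding ys_def by simp
  have msy: "mset ys = add_mset 1 (proots p3)" unfolding ys_def pr by simp
  have L: "Ldesc ! 1 = ys ! (n - 2)" unfolding Ldesc_def ys_def[symmetric] using n2 ly
    by (simp add: rev_nth numeral_2_eq_2)
  show ?thesis
  proof (rule ccontr)
    assume "\<not> Ldesc ! 1 \<le> \<mu>"
    hence a: "\<mu> < ys ! (n - 2)" using L by simp
    have b: "ys ! (n - 2) \<le> ys ! (n - 1)" using sorted_nth_mono[OF sy, of "n - 2" "n - 1"] ly n2 by simp
    have is1: "x = 1" if "x \<in> set ys" "\<mu> < x" for x
    proof -
      have "x \<in># add_mset 1 (proots p3)" using that msy by (metis set_mset_mset)
      thus ?thesis using Mprop that by force
    qed
    have a1: "ys ! (n - 2) = 1" using is1 a ly n2 by (simp add: nth_mem)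
    have b1: "ys ! (n - 1) = 1" using is1 a b ly n2 by (simp add: nth_mem)
    have dr: "drop (n - 2) ys = [ys ! (n - 2), ys ! (n - 1)]"
    proof -
      have "drop (n - 2) ys = ys ! (n - 2) # drop (Suc (n - 2)) ys"
        by (rule Cons_nth_drop_Suc[symmetric]) (use ly n2 in simp)
      also have "Suc (n - 2) = n - 1" using n2 by simp
      also have "drop (n - 1) ys = ys ! (n - 1) # drop (Suc (n - 1)) ys"
        by (rule Cons_nth_drop_Suc[symmetric]) (use ly n2 in simp)
      also have "drop (Suc (n - 1)) ys = []" using ly n2 by simp
      finally show ?thesis .
    qed
    have "mset ys = mset (take (n - 2) ys) + mset (drop (n - 2) ys)"
      by (metis append_take_drop_id mset_append)
    hence "2 \<le> count (mset ys) 1" unfolding dr a1 b1 by simp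
    moreover have "count (mset ys) 1 = 1"
    proof -
      have "1 \<notin># proots p3" using Mprop by force
      thus ?thesis unfolding msy by (simp add: count_eq_zero_iff)
    qed
    ultimately show False by simp
  qed
qed

end

locale wc =
  fixes X :: "'a set set" and d :: nat and P :: "'a set \<Rightarrow> real"
  assumes wc: "weighted_complex X d P"
begin

definition T :: "'a set set" where "T = top_faces X d"
definition S :: "'a set \<Rightarrow> real" where "S \<eta> = (\<Sum>\<sigma>\<in>{\<sigma>\<in>T. \<eta> \<subseteq> \<sigma>}. P \<sigma>)"
definition U :: "'a set" where "U = \<Union>X"

lemma pure: "pure_complex X d" using wc unfolding weighted_complex_def by simp
lemma finX: "finite X" using pure unfolding pure_complex_def by simp
lemma fin_face: "\<sigma> \<in> X \<Longrightarrow> finite \<sigma>" using pure unfolding pure_complex_def by simp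
lemma down: "\<sigma> \<in> X \<Longrightarrow> \<tau> \<subseteq> \<sigma> \<Longrightarrow> \<tau> \<in> X" using pure unfolding pure_complex_def by blast
lemma card_le: "\<sigma> \<in> X \<Longrightarrow> card \<sigma> \<le> d + 1" using pure unfolding pure_complex_def by simp
lemma ext_top: "\<sigma> \<in> X \<Longrightarrow> \<exists>\<eta>\<in>T. \<sigma> \<subseteq> \<eta>"
  using pure unfolding pure_complex_def T_def top_faces_def by blast
lemma T_sub: "T \<subseteq> X" unfolding T_def top_faces_def by auto
lemma finT: "finite T" using finX T_sub finite_subset by blast
lemma T_card: "\<sigma> \<in> T \<Longrightarrow> card \<sigma> = d + 1" unfolding T_def top_faces_def by auto
lemma P_pos: "\<sigma> \<in> T \<Longrightarrow> 0 < P \<sigma>" using wc unfolding weighted_complex_def T_def by simp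
lemma finU: "finite U" unfolding U_def using finX fin_face by blast
lemma face_U: "\<sigma> \<in> X \<Longrightarrow> \<sigma> \<subseteq> U" unfolding U_def by blast

lemma S_nonneg: "0 \<le> S \<eta>"
  unfolding S_def using P_pos by (intro sum_nonneg) (auto simp: less_imp_le)

lemma S_anti: "\<eta> \<subseteq> \<eta>' \<Longrightarrow> S \<eta>' \<le> S \<eta>"
  unfolding S_def using P_pos finT by (intro sum_mono2) (auto simp: less_imp_le)

lemma S_pos: "\<tau> \<in> X \<Longrightarrow> 0 < S \<tau>"
proof -
  assume t: "\<tau> \<in> X"
  obtain \<eta> where e: "\<eta> \<in> T" "\<tau> \<subseteq> \<eta>" using ext_top[OF t] by blast
  show ?thesis unfolding S_def
    by (rule sum_pos2[of _ \<eta>]) (use e P_pos finT in \<open>auto simp: less_imp_le\<close>)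
qed

lemma S_zero: "\<eta> \<notin> X \<Longrightarrow> S \<eta> = 0"
proof -
  assume n: "\<eta> \<notin> X"
  have e: "{\<sigma>\<in>T. \<eta> \<subseteq> \<sigma>} = {}" using n T_sub down by blast
  show ?thesis unfolding S_def e by simp
qed

lemma S_pos_iff: "0 < S \<eta> \<longleftrightarrow> \<eta> \<in> X"
  using S_pos S_zero by force

lemma EXT:
  assumes fin: "finite \<eta>"
  shows "(\<Sum>x\<in>U - \<eta>. S (insert x \<eta>)) = real (d + 1 - card \<eta>) * S \<eta>"
proof -
  have "(\<Sum>x\<in>U - \<eta>. S (insert x \<eta>)) = (\<Sum>x\<in>U - \<eta>. \<Sum>\<sigma>\<in>{\<sigma>\<in>T. \<eta> \<subseteq> \<sigma>}. if x \<in> \<sigma> then P \<sigma> else 0)"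
  proof (intro sum.cong refl)
    fix x
    have "{\<sigma>\<in>T. insert x \<eta> \<subseteq> \<sigma>} = {\<sigma> \<in> {\<sigma>\<in>T. \<eta> \<subseteq> \<sigma>}. x \<in> \<sigma>}" by auto
    hence "S (insert x \<eta>) = (\<Sum>\<sigma>\<in>{\<sigma> \<in> {\<sigma>\<in>T. \<eta> \<subseteq> \<sigma>}. x \<in> \<sigma>}. P \<sigma>)" unfolding S_def by simp
    also have "\<dots> = (\<Sum>\<sigma>\<in>{\<sigma>\<in>T. \<eta> \<subseteq> \<sigma>}. if x \<in> \<sigma> then P \<sigma> else 0)"
      by (rule sum.inter_filter) (use finT in simp)
    finally show "S (insert x \<eta>) = (\<Sum>\<sigma>\<in>{\<sigma>\<in>T. \<eta> \<subseteq> \<sigma>}. if x \<in> \<sigma> then P \<sigma> else 0)" .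
  qed
  also have "\<dots> = (\<Sum>\<sigma>\<in>{\<sigma>\<in>T. \<eta> \<subseteq> \<sigma>}. \<Sum>x\<in>U - \<eta>. if x \<in> \<sigma> then P \<sigma> else 0)"
    by (rule sum.swap)
  also have "\<dots> = (\<Sum>\<sigma>\<in>{\<sigma>\<in>T. \<eta> \<subseteq> \<sigma>}. real (d + 1 - card \<eta>) * P \<sigma>)"
  proof (intro sum.cong refl)
    fix \<sigma> assume s: "\<sigma> \<in> {\<sigma>\<in>T. \<eta> \<subseteq> \<sigma>}"
    have sU: "\<sigma> \<subseteq> U" using s T_sub face_U by blast
    have "(\<Sum>x\<in>U - \<eta>. if x \<in> \<sigma> then P \<sigma> else 0) = (\<Sum>x\<in>(U - \<eta>) \<inter> \<sigma>. P \<sigma>)"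
      by (rule sum.inter_restrict[symmetric]) (use finU in simp)
    also have "(U - \<eta>) \<inter> \<sigma> = \<sigma> - \<eta>" using sU by blast
    also have "(\<Sum>x\<in>\<sigma> - \<eta>. P \<sigma>) = real (card (\<sigma> - \<eta>)) * P \<sigma>" by simp
    also have "card (\<sigma> - \<eta>) = d + 1 - card \<eta>"
      using s fin T_card by (simp add: card_Diff_subset)
    finally show "(\<Sum>x\<in>U - \<eta>. if x \<in> \<sigma> then P \<sigma> else 0) = real (d + 1 - card \<eta>) * P \<sigma>" .
  qed
  also have "\<dots> = real (d + 1 - card \<eta>) * S \<eta>" unfolding S_def by (simp add: sum_distrib_left)
  finally show ?thesis .
qed

end

lemma sum_skip: assumes "finite A" shows "(\<Sum>u\<in>A. if u = a then 0 else g u) = (\<Sum>u\<in>A - {a}. g u)"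
proof -
  have "(\<Sum>u\<in>A. if u = a then 0 else g u) = (\<Sum>u\<in>A - {a}. if u = a then 0 else g u)"
    by (rule sum.mono_neutral_right) (use assms in auto)
  also have "\<dots> = (\<Sum>u\<in>A - {a}. g u)" by (intro sum.cong) auto
  finally show ?thesis .
qed

context wc begin

definition kk :: "'a set \<Rightarrow> real" where "kk \<tau> = real (d - card \<tau>)"
definition Ev :: "'a set \<Rightarrow> 'a \<Rightarrow> 'a \<Rightarrow> real" where
  "Ev \<tau> u v = (if u = v then 0 else S (insert u (insert v \<tau>)))"
definition Nv :: "'a set \<Rightarrow> ('a \<Rightarrow> real) \<Rightarrow> real" where
  "Nv \<tau> f = (\<Sum>v\<in>U - \<tau>. S (insert v \<tau>) * (f v)^2)"
definition Mv :: "'a set \<Rightarrow> ('a \<Rightarrow> real) \<Rightarrow> real" where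
  "Mv \<tau> f = (\<Sum>v\<in>U - \<tau>. S (insert v \<tau>) * f v)"
definition Zv :: "'a set \<Rightarrow> real" where
  "Zv \<tau> = (\<Sum>v\<in>U - \<tau>. S (insert v \<tau>))"
definition Qv :: "'a set \<Rightarrow> ('a \<Rightarrow> real) \<Rightarrow> real" where
  "Qv \<tau> f = (\<Sum>u\<in>U - \<tau>. \<Sum>v\<in>U - \<tau>. Ev \<tau> u v * f u * f v)"
definition Afv :: "'a set \<Rightarrow> ('a \<Rightarrow> real) \<Rightarrow> 'a \<Rightarrow> real" where
  "Afv \<tau> f x = (\<Sum>u\<in>U - \<tau>. Ev \<tau> x u * f u) / (kk \<tau> * S (insert x \<tau>))"
definition RBv :: "'a set \<Rightarrow> real \<Rightarrow> bool" where
  "RBv \<tau> \<mu> \<longleftrightarrow> (\<forall>f. Qv \<tau> f \<le> kk \<tau> * (\<mu> * Nv \<tau> f + (1 - \<mu>) * (Mv \<tau> f)^2 / Zv \<tau>))"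

lemma EXT': "finite \<eta> \<Longrightarrow> card \<eta> \<le> d + 1 \<Longrightarrow>
   (\<Sum>x\<in>U - \<eta>. S (insert x \<eta>)) = (real d + 1 - real (card \<eta>)) * S \<eta>"
  using EXT by (simp add: of_nat_diff)

lemma RBv_zero: assumes "S \<tau> = 0" shows "RBv \<tau> \<mu>"
proof -
  have z: "S \<eta> = 0" if "\<tau> \<subseteq> \<eta>" for \<eta> using S_anti[OF that] S_nonneg[of \<eta>] assms by simp
  have z2: "S (insert a (insert b \<tau>)) = 0" for a b by (rule z) blast
  have "Qv \<tau> f = 0" for f unfolding Qv_def Ev_def using z2 by (auto intro!: sum.neutral)
  moreover have "Nv \<tau> f = 0" for f unfolding Nv_def using z by (intro sum.neutral) auto
  moreover have "Mv \<tau> f = 0" for f unfolding Mv_def using z by (intro sum.neutral) auto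
  ultimately show ?thesis unfolding RBv_def by simp
qed

lemma garland_Q:
  assumes fin: "finite \<tau>" and k2: "card \<tau> + 2 \<le> d"
  shows "(\<Sum>x\<in>U - \<tau>. Qv (insert x \<tau>) f) = (kk \<tau> - 1) * Qv \<tau> f"
proof -
  have fU: "finite (U - \<tau>)" using finU by simp
  have "(\<Sum>x\<in>U - \<tau>. Qv (insert x \<tau>) f) =
     (\<Sum>x\<in>U - \<tau>. \<Sum>u\<in>U - \<tau>. \<Sum>v\<in>U - \<tau>. if u = x \<or> v = x then 0 else Ev (insert x \<tau>) u v * f u * f v)"
  proof (intro sum.cong refl)
    fix x assume x: "x \<in> U - \<tau>"
    have e: "U - insert x \<tau> = (U - \<tau>) - {x}" by auto
    have "(\<Sum>u\<in>U - \<tau>. \<Sum>v\<in>U - \<tau>. if u = x \<or> v = x then 0 else Ev (insert x \<tau>) u v * f u * f v)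
        = (\<Sum>u\<in>U - \<tau>. if u = x then 0 else \<Sum>v\<in>U - \<tau>. if v = x then 0 else Ev (insert x \<tau>) u v * f u * f v)"
      by (intro sum.cong refl) auto
    also have "\<dots> = (\<Sum>u\<in>(U - \<tau>) - {x}. \<Sum>v\<in>U - \<tau>. if v = x then 0 else Ev (insert x \<tau>) u v * f u * f v)"
      by (rule sum_skip[OF fU])
    also have "\<dots> = (\<Sum>u\<in>(U - \<tau>) - {x}. \<Sum>v\<in>(U - \<tau>) - {x}. Ev (insert x \<tau>) u v * f u * f v)"
      by (intro sum.cong refl sum_skip[OF fU])
    finally show "Qv (insert x \<tau>) f = (\<Sum>u\<in>U - \<tau>. \<Sum>v\<in>U - \<tau>. if u = x \<or> v = x then 0 else Ev (insert x \<tau>) u v * f u * f v)"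
      unfolding Qv_def e by simp
  qed
  also have "\<dots> = (\<Sum>u\<in>U - \<tau>. \<Sum>x\<in>U - \<tau>. \<Sum>v\<in>U - \<tau>. if u = x \<or> v = x then 0 else Ev (insert x \<tau>) u v * f u * f v)"
    by (rule sum.swap)
  also have "\<dots> = (\<Sum>u\<in>U - \<tau>. \<Sum>v\<in>U - \<tau>. \<Sum>x\<in>U - \<tau>. if u = x \<or> v = x then 0 else Ev (insert x \<tau>) u v * f u * f v)"
    by (intro sum.cong refl sum.swap)
  also have "\<dots> = (\<Sum>u\<in>U - \<tau>. \<Sum>v\<in>U - \<tau>. (kk \<tau> - 1) * (Ev \<tau> u v * f u * f v))"
  proof (intro sum.cong refl)
    fix u v assume u: "u \<in> U - \<tau>" and v: "v \<in> U - \<tau>"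
    show "(\<Sum>x\<in>U - \<tau>. if u = x \<or> v = x then 0 else Ev (insert x \<tau>) u v * f u * f v) = (kk \<tau> - 1) * (Ev \<tau> u v * f u * f v)"
    proof (cases "u = v")
      case True thus ?thesis unfolding Ev_def by (simp add: sum.neutral)
    next
      case False
      define \<eta> where "\<eta> = insert u (insert v \<tau>)"
      have fe: "finite \<eta>" unfolding \<eta>_def using fin by simp
      have ce: "card \<eta> = card \<tau> + 2" unfolding \<eta>_def using fin u v False by simp
      have "(\<Sum>x\<in>U - \<tau>. if u = x \<or> v = x then 0 else Ev (insert x \<tau>) u v * f u * f v)
          = (\<Sum>x\<in>U - \<tau>. if x \<in> \<eta> then 0 else S (insert x \<eta>) * (f u * f v))"
        using False u v unfolding Ev_def \<eta>_def by (intro sum.cong refl) (auto simp: insert_commute)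
      also have "\<dots> = (\<Sum>x\<in>U - \<eta>. S (insert x \<eta>) * (f u * f v))"
      proof -
        have "(\<Sum>x\<in>U - \<tau>. if x \<in> \<eta> then 0 else S (insert x \<eta>) * (f u * f v))
           = (\<Sum>x\<in>(U - \<tau>) - \<eta>. S (insert x \<eta>) * (f u * f v))"
          using fU by (intro sum.mono_neutral_cong_right) auto
        also have "(U - \<tau>) - \<eta> = U - \<eta>" unfolding \<eta>_def by auto
        finally show ?thesis .
      qed
      also have "\<dots> = (\<Sum>x\<in>U - \<eta>. S (insert x \<eta>)) * (f u * f v)" by (simp add: sum_distrib_right)
      also have "\<dots> = (real d + 1 - real (card \<eta>)) * S \<eta> * (f u * f v)"
        using EXT'[OF fe] ce k2 by simp
      also have "\<dots> = (kk \<tau> - 1) * (Ev \<tau> u v * f u * f v)"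
        unfolding kk_def Ev_def \<eta>_def using False ce k2 \<eta>_def by (simp add: of_nat_diff algebra_simps)
      finally show ?thesis .
    qed
  qed
  also have "\<dots> = (kk \<tau> - 1) * Qv \<tau> f" unfolding Qv_def by (simp add: sum_distrib_left)
  finally show ?thesis .
qed

lemma garland_N:
  assumes fin: "finite \<tau>" and k1: "card \<tau> + 1 \<le> d"
  shows "(\<Sum>x\<in>U - \<tau>. Nv (insert x \<tau>) f) = kk \<tau> * Nv \<tau> f"
proof -
  have fU: "finite (U - \<tau>)" using finU by simp
  have "(\<Sum>x\<in>U - \<tau>. Nv (insert x \<tau>) f) = (\<Sum>x\<in>U - \<tau>. \<Sum>u\<in>U - \<tau>. if u = x then 0 else S (insert u (insert x \<tau>)) * (f u)^2)"
  proof (intro sum.cong refl)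
    fix x assume x: "x \<in> U - \<tau>"
    have e: "U - insert x \<tau> = (U - \<tau>) - {x}" by auto
    show "Nv (insert x \<tau>) f = (\<Sum>u\<in>U - \<tau>. if u = x then 0 else S (insert u (insert x \<tau>)) * (f u)^2)"
      unfolding Nv_def e by (rule sum_skip[OF fU, symmetric])
  qed
  also have "\<dots> = (\<Sum>u\<in>U - \<tau>. \<Sum>x\<in>U - \<tau>. if u = x then 0 else S (insert u (insert x \<tau>)) * (f u)^2)"
    by (rule sum.swap)
  also have "\<dots> = (\<Sum>u\<in>U - \<tau>. kk \<tau> * (S (insert u \<tau>) * (f u)^2))"
  proof (intro sum.cong refl)
    fix u assume u: "u \<in> U - \<tau>"
    define \<eta> where "\<eta> = insert u \<tau>"
    have fe: "finite \<eta>" unfolding \<eta>_def using fin by simp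
    have ce: "card \<eta> = card \<tau> + 1" unfolding \<eta>_def using fin u by simp
    have "(\<Sum>x\<in>U - \<tau>. if u = x then 0 else S (insert u (insert x \<tau>)) * (f u)^2)
        = (\<Sum>x\<in>U - \<tau>. if x \<in> \<eta> then 0 else S (insert x \<eta>) * (f u)^2)"
      using u unfolding \<eta>_def by (intro sum.cong refl) (auto simp: insert_commute)
    also have "\<dots> = (\<Sum>x\<in>U - \<eta>. S (insert x \<eta>) * (f u)^2)"
    proof -
      have "(\<Sum>x\<in>U - \<tau>. if x \<in> \<eta> then 0 else S (insert x \<eta>) * (f u)^2)
         = (\<Sum>x\<in>(U - \<tau>) - \<eta>. S (insert x \<eta>) * (f u)^2)"
        using fU by (intro sum.mono_neutral_cong_right) auto
      also have "(U - \<tau>) - \<eta> = U - \<eta>" unfolding \<eta>_def by auto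
      finally show ?thesis .
    qed
    also have "\<dots> = (\<Sum>x\<in>U - \<eta>. S (insert x \<eta>)) * (f u)^2" by (simp add: sum_distrib_right)
    also have "\<dots> = (real d + 1 - real (card \<eta>)) * S \<eta> * (f u)^2"
      using EXT'[OF fe] ce k1 by simp
    also have "\<dots> = kk \<tau> * (S (insert u \<tau>) * (f u)^2)"
      unfolding kk_def \<eta>_def using ce k1 \<eta>_def by (simp add: of_nat_diff algebra_simps)
    finally show "(\<Sum>x\<in>U - \<tau>. if u = x then 0 else S (insert u (insert x \<tau>)) * (f u)^2) = kk \<tau> * (S (insert u \<tau>) * (f u)^2)" .
  qed
  also have "\<dots> = kk \<tau> * Nv \<tau> f" unfolding Nv_def by (simp add: sum_distrib_left)
  finally show ?thesis .
qed

lemma garland_M: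
  assumes fin: "finite \<tau>" and k1: "card \<tau> + 1 \<le> d" and x: "x \<in> U - \<tau>"
  shows "(Mv (insert x \<tau>) f)^2 / Zv (insert x \<tau>) = kk \<tau> * S (insert x \<tau>) * (Afv \<tau> f x)^2"
proof -
  have fU: "finite (U - \<tau>)" using finU by simp
  have e: "U - insert x \<tau> = (U - \<tau>) - {x}" by auto
  have ce: "card (insert x \<tau>) = card \<tau> + 1" using fin x by simp
  have Z: "Zv (insert x \<tau>) = kk \<tau> * S (insert x \<tau>)"
    unfolding Zv_def using EXT'[of "insert x \<tau>"] fin ce k1 unfolding kk_def by (simp add: of_nat_diff)
  have M: "Mv (insert x \<tau>) f = (\<Sum>u\<in>U - \<tau>. Ev \<tau> x u * f u)"
  proof -
    have "(\<Sum>u\<in>U - \<tau>. Ev \<tau> x u * f u) = (\<Sum>u\<in>U - \<tau>. if u = x then 0 else S (insert u (insert x \<tau>)) * f u)"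
      unfolding Ev_def by (intro sum.cong refl) (auto simp: insert_commute)
    also have "\<dots> = Mv (insert x \<tau>) f" unfolding Mv_def e by (rule sum_skip[OF fU])
    finally show ?thesis by simp
  qed
  have kpos: "0 < kk \<tau>" unfolding kk_def using k1 by simp
  show ?thesis
  proof (cases "S (insert x \<tau>) = 0")
    case True
    have z: "S (insert u (insert x \<tau>)) = 0" for u
      using S_anti[of "insert x \<tau>" "insert u (insert x \<tau>)"] S_nonneg[of "insert u (insert x \<tau>)"] True by auto
    have "Mv (insert x \<tau>) f = 0" unfolding Mv_def using z by (intro sum.neutral) auto
    thus ?thesis using True by simp
  next
    case False
    have Af: "Afv \<tau> f x = Mv (insert x \<tau>) f / (kk \<tau> * S (insert x \<tau>))" unfolding Afv_def M ..
    show ?thesis unfolding Af Z using False kpos by (simp add: power2_eq_square field_simps)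
  qed
qed

lemma garland:
  assumes fin: "finite \<tau>" and k2: "card \<tau> + 2 \<le> d"
    and RB: "\<And>x. x \<in> U - \<tau> \<Longrightarrow> RBv (insert x \<tau>) \<mu>"
  shows "Qv \<tau> f \<le> kk \<tau> * (\<mu> * Nv \<tau> f + (1 - \<mu>) * Nv \<tau> (Afv \<tau> f))"
proof -
  have k1: "card \<tau> + 1 \<le> d" using k2 by simp
  have kx: "kk (insert x \<tau>) = kk \<tau> - 1" if "x \<in> U - \<tau>" for x
    unfolding kk_def using that fin k2 by (simp add: of_nat_diff)
  have "(kk \<tau> - 1) * Qv \<tau> f = (\<Sum>x\<in>U - \<tau>. Qv (insert x \<tau>) f)" using garland_Q[OF fin k2] by simp
  also have "\<dots> \<le> (\<Sum>x\<in>U - \<tau>. (kk \<tau> - 1) * (\<mu> * Nv (insert x \<tau>) f + (1 - \<mu>) * (kk \<tau> * S (insert x \<tau>) * (Afv \<tau> f x)^2)))"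
  proof (rule sum_mono)
    fix x assume x: "x \<in> U - \<tau>"
    show "Qv (insert x \<tau>) f \<le> (kk \<tau> - 1) * (\<mu> * Nv (insert x \<tau>) f + (1 - \<mu>) * (kk \<tau> * S (insert x \<tau>) * (Afv \<tau> f x)^2))"
    proof -
      have h: "Qv (insert x \<tau>) f \<le> kk (insert x \<tau>) * (\<mu> * Nv (insert x \<tau>) f + (1 - \<mu>) * (Mv (insert x \<tau>) f)^2 / Zv (insert x \<tau>))"
        using RB[OF x] unfolding RBv_def by blast
      have "(1 - \<mu>) * (Mv (insert x \<tau>) f)^2 / Zv (insert x \<tau>) = (1 - \<mu>) * ((Mv (insert x \<tau>) f)^2 / Zv (insert x \<tau>))"
        by simp
      thus ?thesis using h garland_M[OF fin k1 x, of f] kx[OF x] by simp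
    qed
  qed
  also have "\<dots> = (\<Sum>x\<in>U - \<tau>. ((kk \<tau> - 1) * \<mu>) * Nv (insert x \<tau>) f + ((kk \<tau> - 1) * (1 - \<mu>) * kk \<tau>) * (S (insert x \<tau>) * (Afv \<tau> f x)^2))"
    by (intro sum.cong refl) (simp add: algebra_simps)
  also have "\<dots> = ((kk \<tau> - 1) * \<mu>) * (\<Sum>x\<in>U - \<tau>. Nv (insert x \<tau>) f) + ((kk \<tau> - 1) * (1 - \<mu>) * kk \<tau>) * (\<Sum>x\<in>U - \<tau>. S (insert x \<tau>) * (Afv \<tau> f x)^2)"
    by (simp add: sum.distrib sum_distrib_left)
  also have "\<dots> = (kk \<tau> - 1) * (kk \<tau> * (\<mu> * Nv \<tau> f + (1 - \<mu>) * Nv \<tau> (Afv \<tau> f)))"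
    unfolding garland_N[OF fin k1] Nv_def[of _ "Afv \<tau> f"] by (simp add: algebra_simps)
  finally have "(kk \<tau> - 1) * Qv \<tau> f \<le> (kk \<tau> - 1) * (kk \<tau> * (\<mu> * Nv \<tau> f + (1 - \<mu>) * Nv \<tau> (Afv \<tau> f)))" .
  moreover have "0 < kk \<tau> - 1" unfolding kk_def using k2 by simp
  ultimately show ?thesis by simp
qed

end

lemma sum_nth_distinct: "distinct xs \<Longrightarrow> (\<Sum>j<length xs. g (xs ! j)) = (\<Sum>v\<in>set xs. g v)"
  by (rule sum.reindex_bij_betw[OF bij_betw_nth]) auto

lemma real_choose_two: "real (Suc k choose 2) = real (Suc k) * real k / 2"
  by (simp add: choose_two real_of_nat_div algebra_simps)

lemma ratio_lemma: fixes e s a k :: real assumes s: "0 < s" and a: "0 < a" and k: "0 < k"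
  shows "(e / (s * ((1 + k) * k / 2))) / (2 * (a / (s * (1 + k)))) = e / (k * a)"
proof -
  have k1: "0 < 1 + k" using k by simp
  have "(e / (s * ((1 + k) * k / 2))) / (2 * (a / (s * (1 + k)))) = (2 * e / (s * (1 + k) * k)) * ((s * (1 + k)) / (2 * a))"
    using s a k k1 by (simp add: divide_simps)
  also have "\<dots> = e / (k * a)" using s a k k1 by (simp add: divide_simps)
  finally show ?thesis .
qed

locale lk = wc +
  fixes \<tau> :: "'a set"
  assumes tX: "\<tau> \<in> X" and tc: "card \<tau> + 1 \<le> d"
begin

definition k :: nat where "k = d - card \<tau>"
definition V where "V = vertices (link X \<tau>)"
definition vs where "vs = vertex_list (link X \<tau>)"
definition nn where "nn = length vs"
definition ww :: "nat \<Rightarrow> real" where "ww i = S (insert (vs ! i) \<tau>)"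
definition Am :: "real mat" where "Am = adj_matrix (link X \<tau>) k (link_dist X d P \<tau>)"

lemma fin\<tau>: "finite \<tau>" using fin_face tX .
lemma kpos: "1 \<le> k" unfolding k_def using tc by simp
lemma kk_eq: "kk \<tau> = real k" unfolding kk_def k_def ..

lemma V_char: "V = {v. v \<notin> \<tau> \<and> insert v \<tau> \<in> X}"
proof -
  have "{v} \<in> link X \<tau> \<longleftrightarrow> v \<notin> \<tau> \<and> insert v \<tau> \<in> X" for v
  proof
    assume "{v} \<in> link X \<tau>"
    then obtain \<sigma> where s: "{v} = \<sigma> - \<tau>" "\<sigma> \<in> X" "\<tau> \<subseteq> \<sigma>" unfolding link_def by blast
    hence "\<sigma> = insert v \<tau>" by blast
    thus "v \<notin> \<tau> \<and> insert v \<tau> \<in> X" using s by blast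
  next
    assume h: "v \<notin> \<tau> \<and> insert v \<tau> \<in> X"
    have "{v} = insert v \<tau> - \<tau>" using h by blast
    thus "{v} \<in> link X \<tau>" unfolding link_def using h by blast
  qed
  thus ?thesis unfolding V_def vertices_def by auto
qed

lemma V_sub: "V \<subseteq> U - \<tau>" using V_char face_U by auto
lemma finV: "finite V" using V_sub finU finite_subset by blast

lemma vs: "distinct vs \<and> set vs = V"
proof -
  have "\<exists>xs. distinct xs \<and> set xs = V" using finite_distinct_list[OF finV] by blast
  thus ?thesis unfolding vs_def vertex_list_def V_def[symmetric] by (rule someI_ex)
qed

lemma vs_V: "i < nn \<Longrightarrow> vs ! i \<in> V" using vs unfolding nn_def by auto

lemma S_V: "v \<in> V \<Longrightarrow> 0 < S (insert v \<tau>)" using V_char S_pos by auto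
lemma S_notV: "v \<in> U - \<tau> \<Longrightarrow> v \<notin> V \<Longrightarrow> S (insert v \<tau>) = 0" using V_char S_zero by auto

lemma Ev_notV: assumes "v \<in> U - \<tau>" "v \<notin> V" shows "Ev \<tau> u v = 0" "Ev \<tau> v u = 0"
proof -
  have "S (insert u (insert v \<tau>)) \<le> S (insert v \<tau>)" by (rule S_anti) auto
  hence z: "S (insert u (insert v \<tau>)) = 0" using S_notV[OF assms] S_nonneg[of "insert u (insert v \<tau>)"] by simp
  show "Ev \<tau> u v = 0" unfolding Ev_def using z by simp
  show "Ev \<tau> v u = 0" unfolding Ev_def using z by (simp add: insert_commute)
qed

lemma Ev_sym: "Ev \<tau> u v = Ev \<tau> v u" unfolding Ev_def by (simp add: insert_commute)
lemma Ev_nn: "0 \<le> Ev \<tau> u v" unfolding Ev_def using S_nonneg by simp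

lemma sum_UV: assumes "\<And>v. v \<in> U - \<tau> \<Longrightarrow> v \<notin> V \<Longrightarrow> h v = 0"
  shows "(\<Sum>v\<in>U - \<tau>. h v) = (\<Sum>i<nn. h (vs ! i))"
proof -
  have "(\<Sum>v\<in>U - \<tau>. h v) = (\<Sum>v\<in>V. h v)"
    by (rule sum.mono_neutral_right) (use finU V_sub assms in auto)
  also have "\<dots> = (\<Sum>i<nn. h (vs ! i))" unfolding nn_def using vs sum_nth_distinct[of vs h] by simp
  finally show ?thesis .
qed

lemma edge_char: "skel_edge (link X \<tau>) a b \<longleftrightarrow> a \<noteq> b \<and> a \<notin> \<tau> \<and> b \<notin> \<tau> \<and> insert a (insert b \<tau>) \<in> X"
proof
  assume "skel_edge (link X \<tau>) a b"
  hence ab: "a \<noteq> b" "{a,b} \<in> link X \<tau>" unfolding skel_edge_def by auto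
  then obtain \<sigma> where s: "{a,b} = \<sigma> - \<tau>" "\<sigma> \<in> X" "\<tau> \<subseteq> \<sigma>" unfolding link_def by blast
  hence "\<sigma> = insert a (insert b \<tau>)" by blast
  thus "a \<noteq> b \<and> a \<notin> \<tau> \<and> b \<notin> \<tau> \<and> insert a (insert b \<tau>) \<in> X" using s ab by blast
next
  assume h: "a \<noteq> b \<and> a \<notin> \<tau> \<and> b \<notin> \<tau> \<and> insert a (insert b \<tau>) \<in> X"
  have "{a,b} = insert a (insert b \<tau>) - \<tau>" using h by blast
  hence "{a,b} \<in> link X \<tau>" unfolding link_def using h by blast
  thus "skel_edge (link X \<tau>) a b" unfolding skel_edge_def using h by simp
qed

lemma weight_link:
  assumes dj: "\<eta> \<inter> \<tau> = {}"
  shows "weight (link X \<tau>) k (link_dist X d P \<tau>) \<eta> = S (\<tau> \<union> \<eta>) / (S \<tau> * real (Suc k choose card \<eta>))"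
proof -
  let ?A = "{\<sigma>\<in>T. \<tau> \<union> \<eta> \<subseteq> \<sigma>}"
  have img: "{\<sigma>'\<in>top_faces (link X \<tau>) k. \<eta> \<subseteq> \<sigma>'} = (\<lambda>\<sigma>. \<sigma> - \<tau>) ` ?A"
  proof
    show "{\<sigma>'\<in>top_faces (link X \<tau>) k. \<eta> \<subseteq> \<sigma>'} \<subseteq> (\<lambda>\<sigma>. \<sigma> - \<tau>) ` ?A"
    proof
      fix \<sigma>' assume "\<sigma>' \<in> {\<sigma>'\<in>top_faces (link X \<tau>) k. \<eta> \<subseteq> \<sigma>'}"
      hence s': "\<sigma>' \<in> link X \<tau>" "card \<sigma>' = k + 1" "\<eta> \<subseteq> \<sigma>'" unfolding top_faces_def by auto
      then obtain \<sigma> where s: "\<sigma>' = \<sigma> - \<tau>" "\<sigma> \<in> X" "\<tau> \<subseteq> \<sigma>" unfolding link_def by blast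
      have "card \<sigma> = card \<sigma>' + card \<tau>" using s fin_face fin\<tau>
        by (metis card_Diff_subset card_mono le_add_diff_inverse2 finite_subset)
      hence "card \<sigma> = d + 1" using s'(2) tc unfolding k_def by simp
      hence "\<sigma> \<in> T" unfolding T_def top_faces_def using s by simp
      moreover have "\<tau> \<union> \<eta> \<subseteq> \<sigma>" using s s'(3) by blast
      ultimately show "\<sigma>' \<in> (\<lambda>\<sigma>. \<sigma> - \<tau>) ` ?A" using s by blast
    qed
  next
    show "(\<lambda>\<sigma>. \<sigma> - \<tau>) ` ?A \<subseteq> {\<sigma>'\<in>top_faces (link X \<tau>) k. \<eta> \<subseteq> \<sigma>'}"
    proof
      fix \<sigma>' assume "\<sigma>' \<in> (\<lambda>\<sigma>. \<sigma> - \<tau>) ` ?A"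
      then obtain \<sigma> where s: "\<sigma>' = \<sigma> - \<tau>" "\<sigma> \<in> T" "\<tau> \<union> \<eta> \<subseteq> \<sigma>" by blast
      have sX: "\<sigma> \<in> X" using s T_sub by blast
      have "card \<sigma>' = card \<sigma> - card \<tau>" using s fin\<tau> by (simp add: card_Diff_subset)
      hence "card \<sigma>' = k + 1" using s T_card tc unfolding k_def by simp
      moreover have "\<sigma>' \<in> link X \<tau>" unfolding link_def using s sX by blast
      moreover have "\<eta> \<subseteq> \<sigma>'" using s dj by blast
      ultimately show "\<sigma>' \<in> {\<sigma>'\<in>top_faces (link X \<tau>) k. \<eta> \<subseteq> \<sigma>'}" unfolding top_faces_def by simp
    qed
  qed
  have inj: "inj_on (\<lambda>\<sigma>. \<sigma> - \<tau>) ?A"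
  proof (rule inj_onI)
    fix \<sigma>1 \<sigma>2 assume "\<sigma>1 \<in> ?A" "\<sigma>2 \<in> ?A" "\<sigma>1 - \<tau> = \<sigma>2 - \<tau>"
    thus "\<sigma>1 = \<sigma>2" by blast
  qed
  have den: "(\<Sum>\<sigma>\<in>{\<sigma>\<in>top_faces X d. \<tau> \<subseteq> \<sigma>}. P \<sigma>) = S \<tau>" unfolding S_def T_def ..
  have "(\<Sum>\<sigma>'\<in>{\<sigma>'\<in>top_faces (link X \<tau>) k. \<eta> \<subseteq> \<sigma>'}. link_dist X d P \<tau> \<sigma>')
      = (\<Sum>\<sigma>\<in>?A. link_dist X d P \<tau> (\<sigma> - \<tau>))"
    unfolding img by (rule sum.reindex[OF inj, unfolded o_def])
  also have "\<dots> = (\<Sum>\<sigma>\<in>?A. P \<sigma> / S \<tau>)"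
  proof (intro sum.cong refl)
    fix \<sigma> assume "\<sigma> \<in> ?A"
    hence "\<sigma> - \<tau> \<union> \<tau> = \<sigma>" by blast
    thus "link_dist X d P \<tau> (\<sigma> - \<tau>) = P \<sigma> / S \<tau>" unfolding link_dist_def den by simp
  qed
  also have "\<dots> = S (\<tau> \<union> \<eta>) / S \<tau>" unfolding S_def by (simp add: sum_divide_distrib)
  finally show ?thesis unfolding weight_def by simp
qed

lemma Am_carrier: "Am \<in> carrier_mat nn nn"
  unfolding Am_def adj_matrix_def Let_def vs_def[symmetric] nn_def[symmetric] by simp

lemma Am_entry:
  assumes i: "i < nn" and j: "j < nn"
  shows "Am $$ (i,j) = Ev \<tau> (vs ! i) (vs ! j) / (real k * S (insert (vs ! i) \<tau>))"
proof -
  let ?a = "vs ! i" and ?b = "vs ! j"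
  have aV: "?a \<in> V" and bV: "?b \<in> V" using vs_V i j by auto
  have a: "?a \<notin> \<tau>" "insert ?a \<tau> \<in> X" and b: "?b \<notin> \<tau>" "insert ?b \<tau> \<in> X" using aV bV V_char by auto
  have Sa: "0 < S (insert ?a \<tau>)" using S_V[OF aV] .
  have St: "0 < S \<tau>" using S_pos[OF tX] .
  have Am: "Am $$ (i,j) = (if skel_edge (link X \<tau>) ?a ?b
        then weight (link X \<tau>) k (link_dist X d P \<tau>) {?a, ?b} / (2 * weight (link X \<tau>) k (link_dist X d P \<tau>) {?a}) else 0)"
    unfolding Am_def adj_matrix_def Let_def vs_def[symmetric] nn_def[symmetric] using i j by simp
  show ?thesis
  proof (cases "skel_edge (link X \<tau>) ?a ?b")
    case True
    hence ab: "?a \<noteq> ?b" "insert ?a (insert ?b \<tau>) \<in> X" using edge_char by auto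
    have w2: "weight (link X \<tau>) k (link_dist X d P \<tau>) {?a, ?b} = S (insert ?a (insert ?b \<tau>)) / (S \<tau> * (real (Suc k) * real k / 2))"
    proof -
      have c2: "card {?a,?b} = 2" using ab by simp
      have dj: "{?a,?b} \<inter> \<tau> = {}" using a b by blast
      have u: "\<tau> \<union> {?a,?b} = insert ?a (insert ?b \<tau>)" by blast
      show ?thesis using weight_link[OF dj] unfolding c2 u real_choose_two .
    qed
    have w1: "weight (link X \<tau>) k (link_dist X d P \<tau>) {?a} = S (insert ?a \<tau>) / (S \<tau> * real (Suc k))"
      using weight_link[of "{?a}"] a by simp
    have "Am $$ (i,j) = weight (link X \<tau>) k (link_dist X d P \<tau>) {?a, ?b} / (2 * weight (link X \<tau>) k (link_dist X d P \<tau>) {?a})"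
      unfolding Am using True by simp
    also have "\<dots> = S (insert ?a (insert ?b \<tau>)) / (real k * S (insert ?a \<tau>))"
      unfolding w1 w2 of_nat_Suc by (rule ratio_lemma) (use Sa St kpos in auto)
    finally have "Am $$ (i,j) = S (insert ?a (insert ?b \<tau>)) / (real k * S (insert ?a \<tau>))" .
    thus ?thesis unfolding Ev_def using ab by simp
  next
    case False
    have "Ev \<tau> ?a ?b = 0"
    proof (cases "?a = ?b")
      case True thus ?thesis unfolding Ev_def by simp
    next
      case ne: False
      hence "insert ?a (insert ?b \<tau>) \<notin> X" using False edge_char a b by blast
      thus ?thesis unfolding Ev_def using S_zero ne by simp
    qed
    thus ?thesis unfolding Am using False by simp
  qed
qed

end

locale lkc = lk +
  assumes conn: "skel_connected (link X \<tau>)"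
begin

lemma ww_pos: "i < nn \<Longrightarrow> 0 < ww i" unfolding ww_def using S_V vs_V by blast

lemma Ev_pos_edge: "skel_edge (link X \<tau>) a b \<Longrightarrow> 0 < Ev \<tau> a b"
  using edge_char S_pos unfolding Ev_def by auto

lemma idx: assumes "v \<in> V" shows "\<exists>l<nn. vs ! l = v"
  using assms vs unfolding nn_def by (auto simp: in_set_conv_nth)

definition ix :: "'a \<Rightarrow> nat" where "ix v = (SOME l. l < nn \<and> vs ! l = v)"

lemma ix: "v \<in> V \<Longrightarrow> ix v < nn \<and> vs ! (ix v) = v"
  unfolding ix_def by (rule someI_ex) (rule idx)

lemma ix_nth: "l < nn \<Longrightarrow> ix (vs ! l) = l"
proof -
  assume l: "l < nn"
  have "ix (vs ! l) < nn" "vs ! ix (vs ! l) = vs ! l" using ix[OF vs_V[OF l]] by auto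
  thus ?thesis using l vs nth_eq_iff_index_eq unfolding nn_def by blast
qed

lemma rowsum: assumes a: "a \<in> V" shows "(\<Sum>v\<in>U - \<tau>. Ev \<tau> a v) = real k * S (insert a \<tau>)"
proof -
  have aU: "a \<in> U - \<tau>" using a V_sub by blast
  have fU: "finite (U - \<tau>)" using finU by simp
  have "(\<Sum>v\<in>U - \<tau>. Ev \<tau> a v) = (\<Sum>v\<in>U - \<tau>. if v = a then 0 else S (insert v (insert a \<tau>)))"
    unfolding Ev_def by (intro sum.cong refl) (auto simp: insert_commute)
  also have "\<dots> = (\<Sum>v\<in>(U - \<tau>) - {a}. S (insert v (insert a \<tau>)))" by (rule sum_skip[OF fU])
  also have "(U - \<tau>) - {a} = U - insert a \<tau>" by auto
  also have "(\<Sum>v\<in>U - insert a \<tau>. S (insert v (insert a \<tau>))) = (real d + 1 - real (card (insert a \<tau>))) * S (insert a \<tau>)"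
    by (rule EXT') (use fin\<tau> aU tc in auto)
  also have "card (insert a \<tau>) = card \<tau> + 1" using fin\<tau> aU by simp
  finally show ?thesis unfolding k_def using tc by (simp add: of_nat_diff)
qed

lemma nn2: "2 \<le> nn"
proof -
  obtain \<sigma> where s: "\<sigma> \<in> T" "\<tau> \<subseteq> \<sigma>" using ext_top[OF tX] by blast
  have sX: "\<sigma> \<in> X" using s T_sub by blast
  have "card (\<sigma> - \<tau>) = card \<sigma> - card \<tau>" using s fin\<tau> by (simp add: card_Diff_subset)
  hence c: "2 \<le> card (\<sigma> - \<tau>)" using T_card[OF s(1)] tc by simp
  have "\<sigma> - \<tau> \<subseteq> V" unfolding V_char using s sX down by auto
  hence "card (\<sigma> - \<tau>) \<le> card V" using finV by (rule card_mono[rotated])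
  moreover have "card V = nn" using vs unfolding nn_def by (metis distinct_card)
  ultimately show ?thesis using c by simp
qed

sublocale st: stoch nn ww Am
proof (unfold_locales)
  show "Am \<in> carrier_mat nn nn" by (rule Am_carrier)
next
  fix i assume "i < nn" thus "0 < ww i" by (rule ww_pos)
next
  fix i j assume i: "i < nn" and j: "j < nn"
  show "ww i * Am $$ (i, j) = ww j * Am $$ (j, i)"
    unfolding Am_entry[OF i j] Am_entry[OF j i] ww_def using ww_pos[OF i] ww_pos[OF j] Ev_sym[of "vs ! i" "vs ! j"]
    unfolding ww_def by simp
next
  fix i j assume i: "i < nn" and j: "j < nn"
  show "0 \<le> Am $$ (i, j)" unfolding Am_entry[OF i j] using Ev_nn ww_pos[OF i] unfolding ww_def by simp
next
  fix i assume i: "i < nn"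
  have aV: "vs ! i \<in> V" by (rule vs_V[OF i])
  have "(\<Sum>j<nn. Am $$ (i, j)) = (\<Sum>j<nn. Ev \<tau> (vs ! i) (vs ! j)) / (real k * S (insert (vs ! i) \<tau>))"
    using Am_entry[OF i] by (simp add: sum_divide_distrib)
  also have "(\<Sum>j<nn. Ev \<tau> (vs ! i) (vs ! j)) = (\<Sum>v\<in>U - \<tau>. Ev \<tau> (vs ! i) v)"
    by (rule sum_UV[symmetric]) (use Ev_notV in auto)
  also have "\<dots> = real k * S (insert (vs ! i) \<tau>)" by (rule rowsum[OF aV])
  finally show "(\<Sum>j<nn. Am $$ (i, j)) = 1" using kpos S_V[OF aV] by simp
next
  show "0 < nn" using nn2 by simp
next
  fix f :: "nat \<Rightarrow> real" and i j
  assume h: "\<And>i j. i < nn \<Longrightarrow> j < nn \<Longrightarrow> Am $$ (i, j) \<noteq> 0 \<Longrightarrow> f i = f j"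
    and i: "i < nn" and j: "j < nn"
  define F where "F = (\<lambda>v. f (ix v))"
  have edgeF: "F y = F z" if e: "skel_edge (link X \<tau>) y z" for y z
  proof -
    have yz: "y \<noteq> z" "y \<notin> \<tau>" "z \<notin> \<tau>" "insert y (insert z \<tau>) \<in> X" using e edge_char by auto
    have "insert y \<tau> \<in> X" by (rule down[OF yz(4)]) blast
    hence yV: "y \<in> V" using yz unfolding V_char by auto
    have "insert z \<tau> \<in> X" by (rule down[OF yz(4)]) blast
    hence zV: "z \<in> V" using yz unfolding V_char by auto
    have iy: "ix y < nn" "vs ! ix y = y" using ix[OF yV] by auto
    have iz: "ix z < nn" "vs ! ix z = z" using ix[OF zV] by auto
    have "Am $$ (ix y, ix z) \<noteq> 0"
      unfolding Am_entry[OF iy(1) iz(1)] iy(2) iz(2) using Ev_pos_edge[OF e] kpos S_V[OF yV] by simp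
    thus ?thesis unfolding F_def using h iy(1) iz(1) by blast
  qed
  have "(skel_edge (link X \<tau>))\<^sup>*\<^sup>* (vs ! i) (vs ! j)"
    using conn vs_V[OF i] vs_V[OF j] unfolding skel_connected_def V_def by blast
  hence "F (vs ! i) = F (vs ! j)"
  proof (induction rule: rtranclp_induct)
    case base thus ?case ..
  next
    case (step y z) thus ?case using edgeF by simp
  qed
  thus "f i = f j" unfolding F_def using ix_nth[OF i] ix_nth[OF j] by simp
qed

lemma tr_ip: "st.ip (\<lambda>i. f (vs ! i)) (\<lambda>i. h (vs ! i)) = (\<Sum>v\<in>U - \<tau>. S (insert v \<tau>) * f v * h v)"
  unfolding st.ip_def ww_def by (rule sum_UV[symmetric]) (use S_notV in auto)

lemma tr_Nv: "Nv \<tau> f = st.ip (\<lambda>i. f (vs ! i)) (\<lambda>i. f (vs ! i))"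
  unfolding tr_ip Nv_def by (simp add: power2_eq_square mult.assoc)
lemma tr_Mv: "Mv \<tau> f = st.ip (\<lambda>i. f (vs ! i)) st.one"
  using tr_ip[of f "\<lambda>_. 1"] unfolding Mv_def by simp
lemma tr_Zv: "Zv \<tau> = st.Z"
  unfolding st.Z_def tr_ip[of "\<lambda>_. 1" "\<lambda>_. 1", simplified] Zv_def by simp

lemma tr_Av: "i < nn \<Longrightarrow> st.Av (\<lambda>i. f (vs ! i)) i = Afv \<tau> f (vs ! i)"
proof -
  assume i: "i < nn"
  have "st.Av (\<lambda>i. f (vs ! i)) i = (\<Sum>j<nn. Ev \<tau> (vs ! i) (vs ! j) * f (vs ! j)) / (real k * S (insert (vs ! i) \<tau>))"
    unfolding st.Av_def using Am_entry[OF i] by (simp add: sum_divide_distrib)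
  also have "(\<Sum>j<nn. Ev \<tau> (vs ! i) (vs ! j) * f (vs ! j)) = (\<Sum>v\<in>U - \<tau>. Ev \<tau> (vs ! i) v * f v)"
    by (rule sum_UV[symmetric]) (use Ev_notV in auto)
  finally show ?thesis unfolding Afv_def kk_eq .
qed

lemma tr_Q: "st.Q (\<lambda>i. f (vs ! i)) = Qv \<tau> f / real k"
proof -
  have "st.Q (\<lambda>i. f (vs ! i)) = (\<Sum>i<nn. \<Sum>j<nn. Ev \<tau> (vs ! i) (vs ! j) * f (vs ! i) * f (vs ! j)) / real k"
    unfolding st.Q_def st.ip_def st.Av_def
    by (simp add: sum_divide_distrib sum_distrib_left Am_entry ww_def ww_pos[unfolded ww_def, THEN less_imp_neq, symmetric] ac_simps)
  also have "(\<Sum>i<nn. \<Sum>j<nn. Ev \<tau> (vs ! i) (vs ! j) * f (vs ! i) * f (vs ! j)) = (\<Sum>u\<in>U - \<tau>. \<Sum>j<nn. Ev \<tau> u (vs ! j) * f u * f (vs ! j))"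
    by (rule sum_UV[symmetric]) (use Ev_notV in auto)
  also have "\<dots> = Qv \<tau> f" unfolding Qv_def
    by (intro sum.cong refl, rule sum_UV[symmetric]) (use Ev_notV in auto)
  finally show ?thesis .
qed

definition backf :: "(nat \<Rightarrow> real) \<Rightarrow> 'a \<Rightarrow> real" where "backf g = (\<lambda>v. g (ix v))"
lemma backf: "i < nn \<Longrightarrow> backf g (vs ! i) = g i" unfolding backf_def using ix_nth by simp

lemma rb_to_RBv:
  assumes RB: "\<And>g. st.ip g st.one = 0 \<Longrightarrow> st.Q g \<le> \<mu> * st.ip g g"
  shows "RBv \<tau> \<mu>"
  unfolding RBv_def
proof
  fix f
  have "st.Q (\<lambda>i. f (vs ! i)) \<le> \<mu> * st.ip (\<lambda>i. f (vs ! i)) (\<lambda>i. f (vs ! i)) + (1 - \<mu>) * (st.ip (\<lambda>i. f (vs ! i)) st.one)^2 / st.Z"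
    by (rule st.shifted[OF RB])
  hence "Qv \<tau> f / real k \<le> \<mu> * Nv \<tau> f + (1 - \<mu>) * (Mv \<tau> f)^2 / Zv \<tau>"
    unfolding tr_Q tr_Nv tr_Mv tr_Zv .
  thus "Qv \<tau> f \<le> kk \<tau> * (\<mu> * Nv \<tau> f + (1 - \<mu>) * (Mv \<tau> f)^2 / Zv \<tau>)"
    unfolding kk_eq using kpos by (simp add: divide_le_eq mult.commute)
qed

lemma RBv_to_rb:
  assumes R: "RBv \<tau> \<mu>" and g: "st.ip g st.one = 0"
  shows "st.Q g \<le> \<mu> * st.ip g g"
proof -
  define f where "f = backf g"
  have gf: "\<And>i. i < nn \<Longrightarrow> g i = f (vs ! i)" unfolding f_def using backf by simp
  have Qg: "st.Q g = st.Q (\<lambda>i. f (vs ! i))" using gf by (intro st.Q_cong) auto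
  have ig: "st.ip g g = st.ip (\<lambda>i. f (vs ! i)) (\<lambda>i. f (vs ! i))" using gf by (intro st.ip_cong2) auto
  have ig1: "st.ip g st.one = st.ip (\<lambda>i. f (vs ! i)) st.one" using gf by (intro st.ip_cong2) auto
  have M0: "Mv \<tau> f = 0" using g ig1 tr_Mv by simp
  have "Qv \<tau> f \<le> kk \<tau> * (\<mu> * Nv \<tau> f + (1 - \<mu>) * (Mv \<tau> f)^2 / Zv \<tau>)" using R unfolding RBv_def by blast
  hence "Qv \<tau> f \<le> real k * (\<mu> * Nv \<tau> f)" using M0 unfolding kk_eq by simp
  hence "Qv \<tau> f / real k \<le> \<mu> * Nv \<tau> f" using kpos by (simp add: divide_le_eq mult.commute)
  thus ?thesis unfolding Qg ig tr_Q tr_Nv .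
qed

lemma G_to_idx:
  assumes G: "\<And>f. Qv \<tau> f \<le> kk \<tau> * (\<mu> * Nv \<tau> f + (1 - \<mu>) * Nv \<tau> (Afv \<tau> f))"
  shows "st.Q g \<le> \<mu> * st.ip g g + (1 - \<mu>) * st.ip (st.Av g) (st.Av g)"
proof -
  define f where "f = backf g"
  have gf: "\<And>i. i < nn \<Longrightarrow> g i = f (vs ! i)" unfolding f_def using backf by simp
  have Qg: "st.Q g = st.Q (\<lambda>i. f (vs ! i))" using gf by (intro st.Q_cong) auto
  have ig: "st.ip g g = st.ip (\<lambda>i. f (vs ! i)) (\<lambda>i. f (vs ! i))" using gf by (intro st.ip_cong2) auto
  have Avg: "st.Av g = st.Av (\<lambda>i. f (vs ! i))" using gf by (intro st.Av_cong) auto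
  have iA: "st.ip (st.Av g) (st.Av g) = Nv \<tau> (Afv \<tau> f)"
    unfolding tr_Nv Avg using tr_Av by (intro st.ip_cong2) auto
  have "Qv \<tau> f / real k \<le> \<mu> * Nv \<tau> f + (1 - \<mu>) * Nv \<tau> (Afv \<tau> f)"
    using G[of f] kpos unfolding kk_eq by (simp add: divide_le_eq mult.commute)
  thus ?thesis unfolding Qg ig iA tr_Q tr_Nv .
qed

lemma L_eq: "lambda2 (link X \<tau>) (d - card \<tau>) (link_dist X d P \<tau>) = st.Ldesc ! 1"
  unfolding lambda2_def eigenvalues_desc_def st.Ldesc_def unfolding Am_def k_def ..

lemma lk_base: "lambda2 (link X \<tau>) (d - card \<tau>) (link_dist X d P \<tau>) \<le> \<mu> \<Longrightarrow> \<mu> < 1 \<Longrightarrow> RBv \<tau> \<mu>"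
  by (rule rb_to_RBv, rule st.base_RB) (auto simp: L_eq)

lemma lk_step:
  assumes G: "\<And>f. Qv \<tau> f \<le> kk \<tau> * (\<mu> * Nv \<tau> f + (1 - \<mu>) * Nv \<tau> (Afv \<tau> f))" and mu: "\<mu> < 1"
  shows "RBv \<tau> (\<mu> / (1 - \<mu>))"
  by (rule rb_to_RBv, rule st.rb_from_garland[OF G_to_idx[OF G] mu])

lemma lk_final: "RBv \<tau> \<mu> \<Longrightarrow> lambda2 (link X \<tau>) (d - card \<tau>) (link_dist X d P \<tau>) \<le> \<mu>"
  unfolding L_eq by (rule st.final_L2[OF nn2 RBv_to_rb])

end

context wc begin
lemma lkc_I: "\<tau> \<in> X \<Longrightarrow> card \<tau> + 1 \<le> d \<Longrightarrow> skel_connected (link X \<tau>) \<Longrightarrow> lkc X d P \<tau>"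
  unfolding lkc_def lk_def lkc_axioms_def lk_axioms_def using wc_axioms by auto
end

lemma div_div_aux: "0 < (a::real) \<Longrightarrow> 0 < b \<Longrightarrow> (l / a) / (b / a) = l / b"
  by (simp add: field_simps)

theorem mainTheorem3:
  fixes X :: "'a set set" and d :: nat and P :: "'a set \<Rightarrow> real" and lam :: real
  assumes "weighted_complex X d P"
    and "d \<ge> 2"
    and "0 < lam" and "lam \<le> 1"
    and "\<forall>\<tau>\<in>X. card \<tau> + 1 \<le> d \<longrightarrow> skel_connected (link X \<tau>)"
    and "\<forall>\<tau>\<in>X. card \<tau> + 1 = d \<longrightarrow>
           lambda2 (link X \<tau>) (d - card \<tau>) (link_dist X d P \<tau>) \<le> lam / (1 + (d - 1) * lam)"
  shows "local_spectral_expander X d P lam"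
proof -
  note wcA = assms(1) and d2 = assms(2) and lam0 = assms(3) and lam1 = assms(4)
    and connA = assms(5) and eigA = assms(6)
  interpret wc X d P by (rule wc.intro[OF wcA])
  define mu where "mu = (\<lambda>j::nat. lam / (1 + real j * lam))"
  have den_pos: "0 < 1 + real j * lam" for j using lam0 by (simp add: add_pos_nonneg)
  have mu_lt1: "mu j < 1" if "1 \<le> j" for j
  proof -
    have "lam \<le> real j * lam" using that lam0 by simp
    hence "lam < 1 + real j * lam" by simp
    thus ?thesis unfolding mu_def using den_pos[of j] by simp
  qed
  have mu_le: "mu j \<le> lam" for j
  proof -
    have "1 \<le> 1 + real j * lam" using lam0 by simp
    thus ?thesis unfolding mu_def using lam0 by (simp add: divide_le_eq mult_le_cancel_left1 order_less_imp_le)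
  qed
  have mu_step: "mu (Suc j) / (1 - mu (Suc j)) = mu j" for j
  proof -
    have d1: "0 < 1 + real (Suc j) * lam" by (rule den_pos)
    have d0: "0 < 1 + real j * lam" by (rule den_pos)
    have h1: "1 - mu (Suc j) = (1 + real j * lam) / (1 + real (Suc j) * lam)"
      unfolding mu_def using d1 by (simp add: field_simps)
    have "mu (Suc j) / (1 - mu (Suc j)) = (lam / (1 + real (Suc j) * lam)) / ((1 + real j * lam) / (1 + real (Suc j) * lam))"
      unfolding h1 unfolding mu_def ..
    also have "\<dots> = lam / (1 + real j * lam)"
      by (rule div_div_aux[OF d1 d0])
    finally show ?thesis unfolding mu_def .
  qed
  have key: "\<forall>\<tau>\<in>X. card \<tau> + 1 + m = d \<longrightarrow> RBv \<tau> (mu (card \<tau>))" for m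
  proof (induction m)
    case 0
    show ?case
    proof (intro ballI impI)
      fix \<tau> assume tX: "\<tau> \<in> X" and c: "card \<tau> + 1 + 0 = d"
      have c': "card \<tau> + 1 = d" using c by simp
      interpret lkc X d P \<tau> by (rule lkc_I[OF tX]) (use c' connA tX in auto)
      have "lambda2 (link X \<tau>) (d - card \<tau>) (link_dist X d P \<tau>) \<le> lam / (1 + (d - 1) * lam)"
        using eigA tX c' by blast
      also have "lam / (1 + (d - 1) * lam) = mu (card \<tau>)" unfolding mu_def using c' by (simp add: of_nat_diff)
      finally show "RBv \<tau> (mu (card \<tau>))" by (rule lk_base) (rule mu_lt1, use c' d2 in simp)
    qed
  next
    case (Suc m)
    show ?case
    proof (intro ballI impI)
      fix \<tau> assume tX: "\<tau> \<in> X" and c: "card \<tau> + 1 + Suc m = d"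
      have c2: "card \<tau> + 2 \<le> d" using c by simp
      interpret lkc X d P \<tau> by (rule lkc_I[OF tX]) (use c2 connA tX in auto)
      have ft: "finite \<tau>" using fin_face[OF tX] .
      have RBx: "RBv (insert x \<tau>) (mu (Suc (card \<tau>)))" if x: "x \<in> U - \<tau>" for x
      proof (cases "insert x \<tau> \<in> X")
        case True
        have cx: "card (insert x \<tau>) = Suc (card \<tau>)" using ft x by simp
        show ?thesis using Suc.IH True c cx by (metis add_Suc_shift add_Suc plus_1_eq_Suc)
      next
        case False thus ?thesis using S_zero RBv_zero by blast
      qed
      have G: "Qv \<tau> f \<le> kk \<tau> * (mu (Suc (card \<tau>)) * Nv \<tau> f + (1 - mu (Suc (card \<tau>))) * Nv \<tau> (Afv \<tau> f))" for f
        by (rule garland[OF ft c2 RBx])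
      have "RBv \<tau> (mu (Suc (card \<tau>)) / (1 - mu (Suc (card \<tau>))))"
        by (rule lk_step[OF G]) (rule mu_lt1, simp)
      thus "RBv \<tau> (mu (card \<tau>))" unfolding mu_step .
    qed
  qed
  show ?thesis unfolding local_spectral_expander_def
  proof (intro ballI impI conjI)
    fix \<tau> assume tX: "\<tau> \<in> X" and c: "card \<tau> + 1 \<le> d"
    show cn: "skel_connected (link X \<tau>)" using connA tX c by blast
    interpret lkc X d P \<tau> by (rule lkc_I[OF tX c cn])
    have "RBv \<tau> (mu (card \<tau>))" using key[of "d - (card \<tau> + 1)"] tX c by auto
    hence "lambda2 (link X \<tau>) (d - card \<tau>) (link_dist X d P \<tau>) \<le> mu (card \<tau>)" by (rule lk_final)
    thus "lambda2 (link X \<tau>) (d - card \<tau>) (link_dist X d P \<tau>) \<le> lam" using mu_le[of "card \<tau>"] by simp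
  qed
qed

end
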